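(* Fix $\alpha\in(0,1)$. The functionals $(\eta,\nu)\mapsto\mathrm{KL}_{\inf}^{\mathrm U}(\eta,\nu)$ and $(\eta,\nu)\mapsto\mathrm{KL}_{\inf}^{\mathrm L}(\eta,\nu)$ are jointly lower semicontinuous on $\mathcal P([0,1])\times(0,1)$, where $\mathcal P([0,1])$ carries the weak topology.
   Context: $\mathcal P([0,1])$ is the set of Borel probability measures on $[0,1]$. Let $\rho:=-\log(1-\alpha)$ and $\mathrm{EVaR}_\alpha(\kappa):=\inf_{z>0}\frac1z(\log\mathbb E_\kappa[e^{zX}]+\rho)$ for $X\sim\kappa$. $\mathrm{KL}(\eta\Vert\kappa)=\int\log\frac{d\eta}{d\kappa}d\eta$ if $\eta\ll\kappa$, $+\infty$ otherwise. $\mathrm{KL}_{\inf}^{\mathrm U}(\eta,\nu):=\min\{\mathrm{KL}(\eta\Vert\kappa):\kappa\in\mathcal P([0,1]),\mathrm{EVaR}_\alpha(\kappa)\ge\nu\}$, $\mathrm{KL}_{\inf}^{\mathrm L}(\eta,\nu):=\min\{\mathrm{KL}(\eta\Vert\kappa):\kappa\in\mathcal P([0,1]),\mathrm{EVaR}_\alpha(\kappa)\le\nu\}$. A function $f$ is lower semicontinuous if $f(p)\le\liminf_n f(p_n)$ whenever $p_n\to p$. *)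

theory Defs
  imports "HOL-Probability.Probability"
begin

text \<open>Borel probability measures on [0,1], realised as Borel probability
  measures on the real line concentrated on [0,1].\<close>
definition P01 :: "real measure set" where
  "P01 = {M. prob_space M \<and> sets M = sets borel \<and> emeasure M {0..1} = 1}"

definition weak_conv01 :: "(nat \<Rightarrow> real measure) \<Rightarrow> real measure \<Rightarrow> bool" where
  "weak_conv01 Ms M \<longleftrightarrow>
     (\<forall>f :: real \<Rightarrow> real. continuous_on {0..1} f \<longrightarrow>
        (\<lambda>n. LINT x:{0..1}|Ms n. f x) \<longlonglongrightarrow> (LINT x:{0..1}|M. f x))"

definition rho :: "real \<Rightarrow> real" where
  "rho \<alpha> = - ln (1 - \<alpha>)"

definition EVaR :: "real \<Rightarrow> real measure \<Rightarrow> real" where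
  "EVaR \<alpha> \<kappa> = Inf ((\<lambda>z. (ln (\<integral>x. exp (z * x) \<partial>\<kappa>) + rho \<alpha>) / z) ` {0<..})"

definition KL :: "real measure \<Rightarrow> real measure \<Rightarrow> ereal" where
  "KL \<eta> \<kappa> =
     (if absolutely_continuous \<kappa> \<eta> then
        (let f = (\<lambda>x. enn2real (RN_deriv \<kappa> \<eta> x)) in
          enn2ereal (\<integral>\<^sup>+ x. ennreal (max 0 (ln (f x))) \<partial>\<eta>)
          - enn2ereal (\<integral>\<^sup>+ x. ennreal (max 0 (- ln (f x))) \<partial>\<eta>))
      else \<infinity>)"

definition KLinf_U :: "real \<Rightarrow> real measure \<Rightarrow> real \<Rightarrow> ereal" where
  "KLinf_U \<alpha> \<eta> \<nu> = Inf {KL \<eta> \<kappa> | \<kappa>. \<kappa> \<in> P01 \<and> EVaR \<alpha> \<kappa> \<ge> \<nu>}"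

definition KLinf_L :: "real \<Rightarrow> real measure \<Rightarrow> real \<Rightarrow> ereal" where
  "KLinf_L \<alpha> \<eta> \<nu> = Inf {KL \<eta> \<kappa> | \<kappa>. \<kappa> \<in> P01 \<and> EVaR \<alpha> \<kappa> \<le> \<nu>}"

end

theory Submission
  imports Defs
begin



lemma P01_D:
  assumes "M \<in> P01"
  shows "prob_space M" "sets M = sets borel" "space M = UNIV" "AE x in M. x \<in> {0..1}"
    "measure M {0..1} = 1"
proof -
  show pm: "prob_space M" and s: "sets M = sets borel" using assms by (auto simp: P01_def)
  show sp: "space M = UNIV" using sets_eq_imp_space_eq[OF s] by simp
  interpret prob_space M by fact
  have "emeasure M {0..1} = 1" using assms by (simp add: P01_def)
  then show m1: "measure M {0..1} = 1" by (simp add: measure_def)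
  show "AE x in M. x \<in> {0..1}" using AE_prob_1[OF m1] .
qed

lemma P01_meas:
  assumes "M \<in> P01" "f \<in> borel_measurable borel"
  shows "f \<in> borel_measurable M"
  using assms(2) measurable_cong_sets[OF P01_D(2)[OF assms(1)] refl, of borel] by metis

lemma cont_bound01:
  fixes g :: "real \<Rightarrow> real"
  assumes "continuous_on {0..1} g"
  obtains B where "\<forall>x\<in>{0..1}. \<bar>g x\<bar> \<le> B"
proof -
  have "compact (g ` {0..1})" by (rule compact_continuous_image[OF assms]) simp
  then have "bounded (g ` {0..1})" by (rule compact_imp_bounded)
  then obtain B where "\<forall>y\<in>g ` {0..1}. norm y \<le> B" by (auto simp: bounded_iff)
  then show ?thesis using that by auto
qed

lemma P01_integrable:
  fixes g :: "real \<Rightarrow> real"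
  assumes "M \<in> P01" "g \<in> borel_measurable borel" "\<forall>x\<in>{0..1}. \<bar>g x\<bar> \<le> B"
  shows "integrable M g"
proof -
  interpret prob_space M using P01_D[OF assms(1)] by simp
  show ?thesis
  proof (rule integrable_const_bound[where B=B])
    show "AE x in M. norm (g x) \<le> B" using P01_D(4)[OF assms(1)] assms(3) by auto
    show "g \<in> borel_measurable M" using P01_meas assms by blast
  qed
qed

lemma P01_integrable_cont:
  fixes g :: "real \<Rightarrow> real"
  assumes "M \<in> P01" "continuous_on UNIV g"
  shows "integrable M g"
proof -
  have "continuous_on {0..1} g" using assms(2) continuous_on_subset by blast
  then obtain B where "\<forall>x\<in>{0..1}. \<bar>g x\<bar> \<le> B" by (rule cont_bound01)
  moreover have "g \<in> borel_measurable borel" using assms(2) by (rule borel_measurable_continuous_onI)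
  ultimately show ?thesis using P01_integrable assms(1) by blast
qed

lemma P01_integral_cong:
  fixes g h :: "real \<Rightarrow> real"
  assumes "M \<in> P01" "\<forall>x\<in>{0..1}. g x = h x" "g \<in> borel_measurable borel" "h \<in> borel_measurable borel"
  shows "(\<integral>x. g x \<partial>M) = (\<integral>x. h x \<partial>M)"
proof (rule integral_cong_AE)
  show "g \<in> borel_measurable M" "h \<in> borel_measurable M"
    using assms(3,4) P01_meas assms(1) by blast+
  show "AE x in M. g x = h x" using P01_D(4)[OF assms(1)] assms(2) by auto
qed

definition wc :: "(nat \<Rightarrow> real measure) \<Rightarrow> real measure \<Rightarrow> bool" where
  "wc Ms M \<longleftrightarrow> (\<forall>g::real\<Rightarrow>real. continuous_on UNIV g \<longrightarrow> (\<lambda>n. \<integral>x. g x \<partial>Ms n) \<longlonglongrightarrow> (\<integral>x. g x \<partial>M))"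

lemma wc_of_weak_conv01:
  assumes "weak_conv01 Ms M" "M \<in> P01" "\<forall>n. Ms n \<in> P01"
  shows "wc Ms M"
  unfolding wc_def
proof (intro allI impI)
  fix g :: "real \<Rightarrow> real" assume g: "continuous_on UNIV g"
  have c: "continuous_on {0..1} g" using g continuous_on_subset by blast
  have gm: "g \<in> borel_measurable borel" using g by (rule borel_measurable_continuous_onI)
  have im: "(\<lambda>x. indicator {0..1} x *\<^sub>R g x) \<in> borel_measurable borel"
    by (rule borel_measurable_scaleR[OF borel_measurable_indicator gm]) simp
  have eq: "(LINT x:{0..1}|N. g x) = (\<integral>x. g x \<partial>N)" if "N \<in> P01" for N
    unfolding set_lebesgue_integral_def
    by (rule P01_integral_cong[OF that _ im gm]) (simp add: indicator_def)
  have e1: "\<And>n. (LINT x:{0..1}|Ms n. g x) = (\<integral>x. g x \<partial>Ms n)" using eq assms(3) by blast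
  have "(\<lambda>n. LINT x:{0..1}|Ms n. g x) \<longlonglongrightarrow> (LINT x:{0..1}|M. g x)"
    using assms(1) c unfolding weak_conv01_def by blast
  then show "(\<lambda>n. \<integral>x. g x \<partial>Ms n) \<longlonglongrightarrow> (\<integral>x. g x \<partial>M)"
    unfolding e1 eq[OF assms(2)] .
qed

lemma wc_subseq:
  assumes "wc Ms M" "strict_mono r"
  shows "wc (Ms \<circ> r) M"
  unfolding wc_def
proof (intro allI impI)
  fix g :: "real \<Rightarrow> real" assume g: "continuous_on UNIV g"
  have "(\<lambda>n. \<integral>x. g x \<partial>Ms n) \<longlonglongrightarrow> (\<integral>x. g x \<partial>M)" using assms(1) g unfolding wc_def by blast
  from LIMSEQ_subseq_LIMSEQ[OF this assms(2)]
  show "(\<lambda>n. \<integral>x. g x \<partial>(Ms \<circ> r) n) \<longlonglongrightarrow> (\<integral>x. g x \<partial>M)" by (simp add: o_def)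
qed

definition clamp01 :: "real \<Rightarrow> real" where "clamp01 x = max 0 (min 1 x)"

lemma clamp01_cont: "continuous_on UNIV clamp01"
  unfolding clamp01_def by (intro continuous_intros)

lemma clamp01_in: "clamp01 x \<in> {0..1}" and clamp01_id: "x \<in> {0..1} \<Longrightarrow> clamp01 x = x"
  by (auto simp: clamp01_def)

lemma P01_compact:
  fixes \<kappa>s :: "nat \<Rightarrow> real measure"
  assumes "\<forall>n. \<kappa>s n \<in> P01"
  shows "\<exists>r \<kappa>. strict_mono r \<and> \<kappa> \<in> P01 \<and> wc (\<kappa>s \<circ> r) \<kappa>"
proof -
  have rd: "real_distribution (\<kappa>s n)" for n
  proof (rule real_distribution.intro)
    show "prob_space (\<kappa>s n)" using P01_D(1) assms by blast
    show "real_distribution_axioms (\<kappa>s n)" by (rule real_distribution_axioms.intro) (use P01_D(2) assms in blast)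
  qed
  have "tight \<kappa>s"
    unfolding tight_def
  proof (intro conjI allI impI)
    show "real_distribution (\<kappa>s n)" for n by (rule rd)
    fix e :: real assume "e > 0"
    have "1 - e < measure (\<kappa>s n) {-1<..1}" for n
    proof -
      interpret prob_space "\<kappa>s n" using rd real_distribution_def by blast
      have "measure (\<kappa>s n) {0..1} \<le> measure (\<kappa>s n) {-1<..1}"
        using P01_D(2)[of "\<kappa>s n"] assms by (intro finite_measure_mono) auto
      then show "1 - e < measure (\<kappa>s n) {-1<..1}" using P01_D(5)[of "\<kappa>s n"] assms \<open>e>0\<close> by auto
    qed
    then show "\<exists>a b. a < b \<and> (\<forall>n. 1 - e < measure (\<kappa>s n) {a<..b})"
      by (intro exI[of _ "-1::real"] exI[of _ "1::real"]) auto
  qed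
  from tight_imp_convergent_subsubsequence[OF this strict_mono_id]
  obtain r M where r: "strict_mono r" and M: "real_distribution M" and conv: "weak_conv_m (\<kappa>s \<circ> r) M"
    by (auto simp: o_def)
  interpret M: prob_space M using M real_distribution_def by blast
  have Msets: "sets M = sets borel" using M real_distribution.events_eq_borel by blast
  have rd': "\<And>n. real_distribution ((\<kappa>s \<circ> r) n)" using rd by simp
  have lim: "(\<lambda>n. \<integral>x. f x \<partial>(\<kappa>s \<circ> r) n) \<longlonglongrightarrow> (\<integral>x. f x \<partial>M)"
    if "continuous_on UNIV f" "\<And>x. \<bar>f x\<bar> \<le> B" for f :: "real \<Rightarrow> real" and B
    using weak_conv_imp_integral_bdd_continuous_conv[OF rd' M conv, of f B] that
    by (simp add: continuous_on_eq_continuous_at)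
  define d where "d x = min 1 (max 0 (max (- x) (x - 1)))" for x :: real
  have dc: "continuous_on UNIV d" unfolding d_def by (intro continuous_intros)
  have dm: "d \<in> borel_measurable borel" using dc by (rule borel_measurable_continuous_onI)
  have d01: "0 \<le> d x \<and> d x \<le> 1" for x unfolding d_def by linarith
  have d0: "x \<in> {0..1} \<Longrightarrow> d x = 0" for x unfolding d_def by auto
  have d0': "d x = 0 \<Longrightarrow> x \<in> {0..1}" for x unfolding d_def by (cases "x < 0"; cases "x > 1") auto
  have "(\<lambda>n. \<integral>x. d x \<partial>(\<kappa>s \<circ> r) n) \<longlonglongrightarrow> (\<integral>x. d x \<partial>M)"
    by (rule lim[OF dc, of 1]) (use d01 in auto)
  moreover have "(\<integral>x. d x \<partial>(\<kappa>s \<circ> r) n) = 0" for n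
  proof -
    have "(\<integral>x. d x \<partial>(\<kappa>s \<circ> r) n) = (\<integral>x. 0 \<partial>(\<kappa>s \<circ> r) n)"
      using assms dm d0 by (intro P01_integral_cong) auto
    then show ?thesis by simp
  qed
  ultimately have "(\<lambda>n. 0) \<longlonglongrightarrow> (\<integral>x. d x \<partial>M)" by simp
  then have di: "(\<integral>x. d x \<partial>M) = 0" using LIMSEQ_unique tendsto_const by blast
  have dmM: "d \<in> borel_measurable M" using dm Msets measurable_cong_sets[OF Msets refl, of borel] by metis
  have "integrable M d"
    by (rule M.integrable_const_bound[where B=1]) (use d01 dmM in auto)
  then have "AE x in M. d x = 0"
    using integral_nonneg_eq_0_iff_AE[of M d] di d01 by auto
  then have ae: "AE x in M. x \<in> {0..1}"
    by eventually_elim (rule d0')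
  have "{0..1::real} \<in> sets M" using Msets by simp
  then have "measure M {0..1} = 1" using M.AE_in_set_eq_1 ae by blast
  then have MP: "M \<in> P01" unfolding P01_def using Msets M.prob_space_axioms
    by (simp add: M.emeasure_eq_measure)
  have "wc (\<kappa>s \<circ> r) M" unfolding wc_def
  proof (intro allI impI)
    fix g :: "real \<Rightarrow> real" assume g: "continuous_on UNIV g"
    have c: "continuous_on {0..1} g" using g continuous_on_subset by blast
    obtain B where B: "\<forall>x\<in>{0..1}. \<bar>g x\<bar> \<le> B" using cont_bound01[OF c] by blast
    have gc: "continuous_on UNIV (g \<circ> clamp01)"
      by (rule continuous_on_compose[OF clamp01_cont]) (rule continuous_on_subset[OF g], simp)
    have "(\<lambda>n. \<integral>x. (g \<circ> clamp01) x \<partial>(\<kappa>s \<circ> r) n) \<longlonglongrightarrow> (\<integral>x. (g \<circ> clamp01) x \<partial>M)"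
      by (rule lim[OF gc, of B]) (use B clamp01_in in auto)
    moreover have "(\<integral>x. (g \<circ> clamp01) x \<partial>N) = (\<integral>x. g x \<partial>N)" if "N \<in> P01" for N
      by (rule P01_integral_cong[OF that]) (use gc g in \<open>auto simp: clamp01_id intro!: borel_measurable_continuous_onI\<close>)
    ultimately show "(\<lambda>n. \<integral>x. g x \<partial>(\<kappa>s \<circ> r) n) \<longlonglongrightarrow> (\<integral>x. g x \<partial>M)"
      using assms MP by simp
  qed
  then show ?thesis using r MP by blast
qed




definition mgf :: "real measure \<Rightarrow> real \<Rightarrow> real" where "mgf \<kappa> z = (\<integral>x. exp (z * x) \<partial>\<kappa>)"
definition gz :: "real \<Rightarrow> real measure \<Rightarrow> real \<Rightarrow> real" where "gz \<alpha> \<kappa> z = (ln (mgf \<kappa> z) + rho \<alpha>) / z"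

lemma EVaR_gz: "EVaR \<alpha> \<kappa> = Inf (gz \<alpha> \<kappa> ` {0<..})" unfolding EVaR_def gz_def mgf_def by simp

lemma rho_pos: "0 < \<alpha> \<Longrightarrow> \<alpha> < 1 \<Longrightarrow> 0 < rho \<alpha>"
  unfolding rho_def by simp

lemma exp_cont: "continuous_on UNIV (\<lambda>x::real. exp (z * x))" by (intro continuous_intros)

lemma exp_int: "\<kappa> \<in> P01 \<Longrightarrow> integrable \<kappa> (\<lambda>x::real. exp (z * x))"
  by (rule P01_integrable_cont[OF _ exp_cont])

lemma mgf_mono:
  assumes "\<kappa> \<in> P01" "0 \<le> z" "z \<le> z'"
  shows "mgf \<kappa> z \<le> mgf \<kappa> z'"
  unfolding mgf_def
proof (rule integral_mono_AE[OF exp_int[OF assms(1)] exp_int[OF assms(1)]])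
  show "AE x in \<kappa>. exp (z * x) \<le> exp (z' * x)"
    using P01_D(4)[OF assms(1)] by eventually_elim (use assms in \<open>auto intro: mult_right_mono\<close>)
qed

lemma mgf_ge1:
  assumes "\<kappa> \<in> P01" "0 \<le> z"
  shows "1 \<le> mgf \<kappa> z"
proof -
  interpret prob_space \<kappa> using P01_D(1)[OF assms(1)] .
  have "mgf \<kappa> 0 = 1" unfolding mgf_def by (simp add: prob_space)
  then show ?thesis using mgf_mono[OF assms(1) order_refl assms(2)] by simp
qed

lemma mgf_jensen:
  assumes "\<kappa> \<in> P01" "0 < b" "b \<le> z"
  shows "mgf \<kappa> b powr (z / b) \<le> mgf \<kappa> z"
proof -
  interpret prob_space \<kappa> using P01_D(1)[OF assms(1)] .
  have eqf: "exp (b * x) powr (z / b) = exp (z * x)" for x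
    using assms(2) by (simp add: powr_def)
  have "(\<lambda>y. y powr (z / b)) (expectation (\<lambda>x. exp (b * x))) \<le> expectation (\<lambda>x. (\<lambda>y. y powr (z / b)) (exp (b * x)))"
  proof (rule jensens_inequality[where I="{0<..}" and a=0])
    show "integrable \<kappa> (\<lambda>x. exp (b * x))" by (rule exp_int[OF assms(1)])
    show "AE x in \<kappa>. exp (b * x) \<in> {0<..}" by simp
    show "{0<..} = {0<..<0} \<or> {0::real<..} = {0<..} \<or> {0::real<..} = {..<0} \<or> {0::real<..} = UNIV" by simp
    show "integrable \<kappa> (\<lambda>x. exp (b * x) powr (z / b))" unfolding eqf by (rule exp_int[OF assms(1)])
    show "convex_on {0<..} (\<lambda>y. y powr (z / b))" using assms by (intro powr_convex) simp
  qed
  then show ?thesis unfolding eqf mgf_def by simp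
qed

lemma ln_mgf_ratio:
  assumes "\<kappa> \<in> P01" "0 < b" "b \<le> z"
  shows "ln (mgf \<kappa> b) / b \<le> ln (mgf \<kappa> z) / z"
proof -
  have p: "0 < mgf \<kappa> b" using mgf_ge1[OF assms(1)] assms(2) by (meson less_le_trans order_less_imp_le zero_less_one)
  have "ln (mgf \<kappa> b powr (z / b)) \<le> ln (mgf \<kappa> z)"
    using mgf_jensen[OF assms] p mgf_ge1[OF assms(1), of z] assms by (subst ln_le_cancel_iff) auto
  then have "(z / b) * ln (mgf \<kappa> b) \<le> ln (mgf \<kappa> z)" using p by (simp add: ln_powr)
  then have "ln (mgf \<kappa> b) * z \<le> ln (mgf \<kappa> z) * b" using assms(2) by (simp add: field_simps)
  then show ?thesis using assms(2,3) by (simp add: field_simps)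
qed

lemma ln_mgf_nonneg: "\<kappa> \<in> P01 \<Longrightarrow> 0 \<le> z \<Longrightarrow> 0 \<le> ln (mgf \<kappa> z)"
  using mgf_ge1 by simp

lemma gz_split: "gz \<alpha> \<kappa> z = ln (mgf \<kappa> z) / z + rho \<alpha> / z"
  unfolding gz_def by (simp add: add_divide_distrib)

lemma gz_ge_rho:
  assumes "\<kappa> \<in> P01" "0 < z" shows "rho \<alpha> / z \<le> gz \<alpha> \<kappa> z"
  using ln_mgf_nonneg[OF assms(1), of z] assms(2) unfolding gz_split by simp

lemma gz_ge_ln:
  assumes "\<kappa> \<in> P01" "0 < z" "0 < \<alpha>" "\<alpha> < 1" shows "ln (mgf \<kappa> z) / z \<le> gz \<alpha> \<kappa> z"
  using rho_pos[OF assms(3,4)] assms(2) unfolding gz_split by simp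

lemma gz_pos:
  assumes "\<kappa> \<in> P01" "0 < z" "0 < \<alpha>" "\<alpha> < 1" shows "0 < gz \<alpha> \<kappa> z"
  using gz_ge_rho[OF assms(1,2), of \<alpha>] rho_pos[OF assms(3,4)] assms(2) by (meson divide_pos_pos less_le_trans)

lemma gz_bdd:
  assumes "\<kappa> \<in> P01" "0 < \<alpha>" "\<alpha> < 1" shows "bdd_below (gz \<alpha> \<kappa> ` {0<..})"
  using gz_pos[OF assms(1) _ assms(2,3)] by (intro bdd_belowI[of _ 0]) (auto intro: less_imp_le)

lemma EVaR_le_gz:
  assumes "\<kappa> \<in> P01" "0 < \<alpha>" "\<alpha> < 1" "0 < z" shows "EVaR \<alpha> \<kappa> \<le> gz \<alpha> \<kappa> z"
  unfolding EVaR_gz by (rule cInf_lower) (use assms gz_bdd in auto)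

lemma EVaR_ge:
  assumes "\<And>z. 0 < z \<Longrightarrow> c \<le> gz \<alpha> \<kappa> z" shows "c \<le> EVaR \<alpha> \<kappa>"
  unfolding EVaR_gz by (rule cInf_greatest) (use assms in auto)

lemma EVaR_nonneg:
  assumes "\<kappa> \<in> P01" "0 < \<alpha>" "\<alpha> < 1" shows "0 \<le> EVaR \<alpha> \<kappa>"
  using gz_pos[OF assms(1) _ assms(2,3)] by (intro EVaR_ge) (auto intro: less_imp_le)

lemma mgf_conv:
  assumes "wc \<kappa>s \<kappa>" shows "(\<lambda>n. mgf (\<kappa>s n) z) \<longlonglongrightarrow> mgf \<kappa> z"
  using assms exp_cont unfolding wc_def mgf_def by blast

lemma gz_conv:
  assumes "wc \<kappa>s \<kappa>" "\<kappa> \<in> P01" "0 < z"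
  shows "(\<lambda>n. gz \<alpha> (\<kappa>s n) z) \<longlonglongrightarrow> gz \<alpha> \<kappa> z"
proof -
  have p: "0 < mgf \<kappa> z" using mgf_ge1[OF assms(2), of z] assms(3) by simp
  show ?thesis unfolding gz_def
    by (intro tendsto_intros mgf_conv[OF assms(1)]) (use p assms(3) in auto)
qed

lemma EVaR_usc:
  assumes "0 < \<alpha>" "\<alpha> < 1" "wc \<kappa>s \<kappa>" "\<kappa> \<in> P01" "\<forall>n. \<kappa>s n \<in> P01"
    "\<forall>n. \<nu>s n \<le> EVaR \<alpha> (\<kappa>s n)" "\<nu>s \<longlonglongrightarrow> \<nu>"
  shows "\<nu> \<le> EVaR \<alpha> \<kappa>"
proof (rule EVaR_ge)
  fix z :: real assume z: "0 < z"
  have "\<nu>s n \<le> gz \<alpha> (\<kappa>s n) z" for n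
    using assms(6) EVaR_le_gz[of "\<kappa>s n" \<alpha> z] assms(1,2,5) z by (meson order_trans)
  then show "\<nu> \<le> gz \<alpha> \<kappa> z"
    using LIMSEQ_le[OF assms(7) gz_conv[OF assms(3,4) z]] by blast
qed

lemma EVaR_lsc:
  assumes a: "0 < \<alpha>" "\<alpha> < 1" and wc: "wc \<kappa>s \<kappa>" and kP: "\<kappa> \<in> P01" and ksP: "\<forall>n. \<kappa>s n \<in> P01"
    and le: "\<forall>n. EVaR \<alpha> (\<kappa>s n) \<le> \<nu>s n" and nu: "\<nu>s \<longlonglongrightarrow> \<nu>"
  shows "EVaR \<alpha> \<kappa> \<le> \<nu>"
proof (rule ccontr)
  define E where "E = EVaR \<alpha> \<kappa>"
  assume "\<not> EVaR \<alpha> \<kappa> \<le> \<nu>"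
  then have E: "\<nu> < E" unfolding E_def by simp
  have "0 \<le> \<nu>s n" for n using le EVaR_nonneg[of "\<kappa>s n" \<alpha>] ksP a by (meson order_trans)
  then have nu0: "0 \<le> \<nu>" using LIMSEQ_le_const[OF nu] by blast
  define t2 where "t2 = \<nu> + (E - \<nu>) / 3"
  define t1 where "t1 = \<nu> + 2 * (E - \<nu>) / 3"
  have t: "\<nu> < t2" "t2 < t1" "t1 < E" "0 < t2" "0 < t1" using E nu0 unfolding t1_def t2_def by (auto simp: field_simps)
  define \<rho> where "\<rho> = rho \<alpha>"
  have \<rho>: "0 < \<rho>" unfolding \<rho>_def using rho_pos a by blast
  have EV: "E \<le> gz \<alpha> \<kappa> z" if "0 < z" for z unfolding E_def using EVaR_le_gz[OF kP a that] .
  obtain b where b: "0 < b" "t1 < ln (mgf \<kappa> b) / b"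
  proof (rule ccontr)
    assume "\<not> thesis"
    then have nb: "\<And>b. 0 < b \<Longrightarrow> ln (mgf \<kappa> b) / b \<le> t1" using that by force
    define z where "z = 2 * \<rho> / (E - t1)"
    have z: "0 < z" unfolding z_def using \<rho> t by simp
    have r: "rho \<alpha> / z = (E - t1) / 2" unfolding z_def \<rho>_def[symmetric] using \<rho> t by (simp add: field_simps)
    have "gz \<alpha> \<kappa> z \<le> t1 + (E - t1) / 2" using nb[OF z] r unfolding gz_split by linarith
    then have "E \<le> t1 + (E - t1) / 2" using EV[OF z] by (rule order_trans[rotated])
    then show False using t(3) by (simp add: field_simps)
  qed
  have ev1: "eventually (\<lambda>n. t1 < ln (mgf (\<kappa>s n) b) / b) sequentially"
  proof -
    have "(\<lambda>n. ln (mgf (\<kappa>s n) b) / b) \<longlonglongrightarrow> ln (mgf \<kappa> b) / b"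
      using mgf_ge1[OF kP, of b] b(1) by (intro tendsto_intros mgf_conv[OF wc]) auto
    from order_tendstoD(1)[OF this b(2)] show ?thesis by simp
  qed
  define a0 where "a0 = \<rho> / t1"
  have a0: "0 < a0" unfolding a0_def using \<rho> t by simp
  define q where "q = t1 / t2"
  have q: "1 < q" "0 < q" unfolding q_def using t by auto
  obtain m where m: "b / a0 < q ^ m" using real_arch_pow[OF q(1)] by blast
  have bm: "b \<le> a0 * q ^ m" using m a0 by (simp add: field_simps)
  have ev2: "eventually (\<lambda>n. \<forall>i\<in>{..m}. t1 < gz \<alpha> (\<kappa>s n) (a0 * q ^ i)) sequentially"
  proof (rule eventually_ball_finite)
    show "\<forall>i\<in>{..m}. eventually (\<lambda>n. t1 < gz \<alpha> (\<kappa>s n) (a0 * q ^ i)) sequentially"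
    proof
      fix i assume "i \<in> {..m}"
      have pos: "0 < a0 * q ^ i" using a0 q by simp
      have "t1 < gz \<alpha> \<kappa> (a0 * q ^ i)" using EV[OF pos] t by simp
      then show "eventually (\<lambda>n. t1 < gz \<alpha> (\<kappa>s n) (a0 * q ^ i)) sequentially"
        by (rule order_tendstoD(1)[OF gz_conv[OF wc kP pos]])
    qed
  qed simp
  have "eventually (\<lambda>n. t2 \<le> \<nu>s n) sequentially"
    using ev1 ev2
  proof eventually_elim
    case (elim n)
    have kn: "\<kappa>s n \<in> P01" using ksP by blast
    have "t2 \<le> EVaR \<alpha> (\<kappa>s n)"
    proof (rule EVaR_ge)
      fix z :: real assume z: "0 < z"
      consider "z \<le> a0" | "b \<le> z" | "a0 < z" "z < b" by linarith
      then show "t2 \<le> gz \<alpha> (\<kappa>s n) z"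
      proof cases
        case 1
        have "\<rho> / a0 \<le> \<rho> / z" using 1 z \<rho> by (intro divide_left_mono) auto
        moreover have "\<rho> / a0 = t1" unfolding a0_def using \<rho> t by simp
        ultimately show ?thesis using gz_ge_rho[OF kn z, of \<alpha>] t unfolding \<rho>_def by simp
      next
        case 2
        have "ln (mgf (\<kappa>s n) b) / b \<le> ln (mgf (\<kappa>s n) z) / z" by (rule ln_mgf_ratio[OF kn b(1) 2])
        then show ?thesis using gz_ge_ln[OF kn z a] elim(1) t by simp
      next
        case 3
        define P where "P i = (z \<le> a0 * q ^ i)" for i
        have Pm: "P m" unfolding P_def using 3 bm by simp
        define i0 where "i0 = (LEAST i. P i)"
        have Pi0: "P i0" unfolding i0_def by (rule LeastI[of P m, OF Pm])
        have i0m: "i0 \<le> m" unfolding i0_def by (rule Least_le[of P m, OF Pm])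
        have "i0 \<noteq> 0"
        proof
          assume "i0 = 0" then show False using Pi0 3 unfolding P_def by simp
        qed
        then obtain j where j: "i0 = Suc j" by (cases i0) auto
        have nPj: "\<not> P j" using not_less_Least[of j P] j unfolding i0_def by simp
        define zj where "zj = a0 * q ^ j"
        have zj: "0 < zj" "zj < z" "z \<le> q * zj" using nPj Pi0 a0 q unfolding zj_def P_def j by (auto simp: mult.commute mult.left_commute)
        have jm: "j \<in> {..m}" using i0m j by simp
        have gj: "t1 < gz \<alpha> (\<kappa>s n) zj" using elim(2) jm unfolding zj_def by blast
        have num: "0 \<le> ln (mgf (\<kappa>s n) zj) + rho \<alpha>" using ln_mgf_nonneg[OF kn, of zj] zj \<rho> unfolding \<rho>_def by simp
        have "ln (mgf (\<kappa>s n) zj) \<le> ln (mgf (\<kappa>s n) z)"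
          using mgf_mono[OF kn _ less_imp_le[OF zj(2)]] mgf_ge1[OF kn, of zj] zj by simp
        then have "(ln (mgf (\<kappa>s n) zj) + rho \<alpha>) / (q * zj) \<le> (ln (mgf (\<kappa>s n) z) + rho \<alpha>) / z"
          using num zj z by (intro frac_le) auto
        moreover have "(ln (mgf (\<kappa>s n) zj) + rho \<alpha>) / (q * zj) = gz \<alpha> (\<kappa>s n) zj / q"
          unfolding gz_def by simp
        moreover have "t2 = t1 / q" unfolding q_def using t by simp
        moreover have "t1 / q < gz \<alpha> (\<kappa>s n) zj / q" using gj q by (simp add: divide_strict_right_mono)
        ultimately show ?thesis unfolding gz_def by linarith
      qed
    qed
    then show "t2 \<le> \<nu>s n" using le by (meson order_trans)
  qed
  then have "t2 \<le> \<nu>" using LIMSEQ_le_const[OF nu] by (simp add: eventually_sequentially)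
  then show False using t by simp
qed




definition Fv :: "real measure \<Rightarrow> real measure \<Rightarrow> (real \<Rightarrow> real) \<Rightarrow> real" where
  "Fv \<eta> \<kappa> f = (\<integral>x. f x \<partial>\<eta>) - ln (\<integral>x. exp (f x) \<partial>\<kappa>)"

definition pd :: "real measure \<Rightarrow> real measure \<Rightarrow> real \<Rightarrow> real" where
  "pd \<kappa> \<eta> x = enn2real (RN_deriv \<kappa> \<eta> x)"

definition Kp :: "real measure \<Rightarrow> real measure \<Rightarrow> ennreal" where
  "Kp \<eta> \<kappa> = (\<integral>\<^sup>+ x. ennreal (max 0 (ln (pd \<kappa> \<eta> x))) \<partial>\<eta>)"
definition Kn :: "real measure \<Rightarrow> real measure \<Rightarrow> ennreal" where
  "Kn \<eta> \<kappa> = (\<integral>\<^sup>+ x. ennreal (max 0 (- ln (pd \<kappa> \<eta> x))) \<partial>\<eta>)"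

lemma KL_ac: "absolutely_continuous \<kappa> \<eta> \<Longrightarrow> KL \<eta> \<kappa> = enn2ereal (Kp \<eta> \<kappa>) - enn2ereal (Kn \<eta> \<kappa>)"
  unfolding KL_def Kp_def Kn_def pd_def by (simp add: Let_def)

lemma KL_nac: "\<not> absolutely_continuous \<kappa> \<eta> \<Longrightarrow> KL \<eta> \<kappa> = \<infinity>"
  unfolding KL_def by simp

lemma plogp_le1: "0 \<le> (p::real) \<Longrightarrow> p * max 0 (- ln p) \<le> 1"
proof -
  assume p: "0 \<le> p"
  show ?thesis
  proof (cases "p = 0 \<or> 1 \<le> p")
    case True then show ?thesis using p by auto
  next
    case False
    then have p0: "0 < p" "p < 1" using p by auto
    have "ln (1 / p) \<le> 1 / p - 1" using p0 by (intro ln_le_minus_one) simp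
    then have "- ln p \<le> 1 / p - 1" using p0 by (simp add: ln_div)
    then have "p * (- ln p) \<le> p * (1 / p - 1)" using p0 by (intro mult_left_mono) auto
    also have "\<dots> = 1 - p" using p0 by (simp add: field_simps)
    finally show ?thesis using p0 by (simp add: max_def)
  qed
qed

lemma exp_lip:
  fixes a b C :: real
  assumes "\<bar>a\<bar> \<le> C" "\<bar>b\<bar> \<le> C"
  shows "\<bar>exp a - exp b\<bar> \<le> exp C * \<bar>a - b\<bar>"
proof -
  have key: "exp x - exp y \<le> exp C * (x - y)" if "y \<le> x" "\<bar>x\<bar> \<le> C" for x y :: real
  proof -
    have "1 - (x - y) \<le> exp (y - x)" using exp_ge_add_one_self[of "y - x"] by linarith
    then have "1 - exp (y - x) \<le> x - y" by simp
    then have "exp x * (1 - exp (y - x)) \<le> exp x * (x - y)" by (intro mult_left_mono) auto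
    moreover have "exp x * (1 - exp (y - x)) = exp x - exp y" by (simp add: algebra_simps exp_diff)
    moreover have "exp x * (x - y) \<le> exp C * (x - y)" using that by (intro mult_right_mono) auto
    ultimately show ?thesis by linarith
  qed
  show ?thesis
  proof (cases "b \<le> a")
    case True then show ?thesis using key[OF True assms(1)] by (simp add: abs_if)
  next
    case False then show ?thesis using key[of a b] assms(2) by (simp add: abs_if abs_minus_commute)
  qed
qed

lemma clamp_split: "0 \<le> (N::real) \<Longrightarrow> max (-N) (min N y) = min N (max 0 y) - min N (max 0 (-y))"
  by (auto simp: min_def max_def)

context
  fixes \<eta> \<kappa> :: "real measure"
  assumes eP: "\<eta> \<in> P01" and kP: "\<kappa> \<in> P01" and ac: "absolutely_continuous \<kappa> \<eta>"
begin

lemma sets_ek: "sets \<eta> = sets \<kappa>" using P01_D(2) eP kP by simp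

lemma pd_meas: "pd \<kappa> \<eta> \<in> borel_measurable borel"
proof -
  have "pd \<kappa> \<eta> \<in> borel_measurable \<kappa>" unfolding pd_def by measurable
  then show ?thesis using measurable_cong_sets[OF P01_D(2)[OF kP] refl, of borel] by metis
qed

lemma pd_nonneg: "0 \<le> pd \<kappa> \<eta> x" unfolding pd_def by simp

lemma RN_fin: "AE x in \<kappa>. RN_deriv \<kappa> \<eta> x \<noteq> \<infinity>"
proof -
  interpret k: prob_space \<kappa> using P01_D(1)[OF kP] .
  interpret e: prob_space \<eta> using P01_D(1)[OF eP] .
  show ?thesis by (rule k.RN_deriv_finite) (use ac sets_ek in \<open>auto intro: e.sigma_finite_measure_axioms\<close>)
qed

lemma pd_int:
  assumes "h \<in> borel_measurable borel"
  shows "(\<integral>x. h x \<partial>\<eta>) = (\<integral>x. pd \<kappa> \<eta> x * h x \<partial>\<kappa>)"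
    and "integrable \<eta> h \<longleftrightarrow> integrable \<kappa> (\<lambda>x. pd \<kappa> \<eta> x * h x)"
proof -
  interpret k: prob_space \<kappa> using P01_D(1)[OF kP] .
  interpret e: prob_space \<eta> using P01_D(1)[OF eP] .
  have hm: "h \<in> borel_measurable \<kappa>" using P01_meas[OF kP assms] .
  show "(\<integral>x. h x \<partial>\<eta>) = (\<integral>x. pd \<kappa> \<eta> x * h x \<partial>\<kappa>)"
    unfolding pd_def by (rule k.RN_deriv_integral[OF e.sigma_finite_measure_axioms ac sets_ek hm])
  show "integrable \<eta> h \<longleftrightarrow> integrable \<kappa> (\<lambda>x. pd \<kappa> \<eta> x * h x)"
    unfolding pd_def by (rule k.RN_deriv_integrable[OF e.sigma_finite_measure_axioms ac sets_ek hm])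
qed

lemma pd_nn:
  assumes "h \<in> borel_measurable borel"
  shows "(\<integral>\<^sup>+x. h x \<partial>\<eta>) = (\<integral>\<^sup>+x. ennreal (pd \<kappa> \<eta> x) * h x \<partial>\<kappa>)"
proof -
  interpret k: prob_space \<kappa> using P01_D(1)[OF kP] .
  have hm: "h \<in> borel_measurable \<kappa>" using assms measurable_cong_sets[OF P01_D(2)[OF kP] refl, of borel] by metis
  have "(\<integral>\<^sup>+x. h x \<partial>\<eta>) = (\<integral>\<^sup>+x. RN_deriv \<kappa> \<eta> x * h x \<partial>\<kappa>)"
    by (rule k.RN_deriv_nn_integral[OF ac sets_ek hm])
  also have "\<dots> = (\<integral>\<^sup>+x. ennreal (pd \<kappa> \<eta> x) * h x \<partial>\<kappa>)"
    using RN_fin by (intro nn_integral_cong_AE) (auto simp: pd_def less_top)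
  finally show ?thesis .
qed

lemma pd_total: "integrable \<kappa> (pd \<kappa> \<eta>)" "(\<integral>x. pd \<kappa> \<eta> x \<partial>\<kappa>) = 1"
proof -
  interpret e: prob_space \<eta> using P01_D(1)[OF eP] .
  have "integrable \<eta> (\<lambda>x. 1::real)" by simp
  then show "integrable \<kappa> (pd \<kappa> \<eta>)" using pd_int(2)[of "\<lambda>x. 1"] by simp
  have "(\<integral>x. 1 \<partial>\<eta>) = (1::real)" by (simp add: e.prob_space)
  then show "(\<integral>x. pd \<kappa> \<eta> x \<partial>\<kappa>) = 1" using pd_int(1)[of "\<lambda>x. 1"] by simp
qed

lemma pd_pos: "AE x in \<eta>. 0 < pd \<kappa> \<eta> x"
proof -
  let ?Z = "{x. pd \<kappa> \<eta> x = 0}"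
  have Zs: "?Z \<in> sets borel" using pd_meas by measurable
  have "emeasure \<eta> ?Z = (\<integral>\<^sup>+x. indicator ?Z x \<partial>\<eta>)" using Zs sets_ek P01_D(2)[OF kP] by simp
  also have "\<dots> = (\<integral>\<^sup>+x. ennreal (pd \<kappa> \<eta> x) * indicator ?Z x \<partial>\<kappa>)"
    by (rule pd_nn) (use Zs in simp)
  also have "\<dots> = (\<integral>\<^sup>+x. 0 \<partial>\<kappa>)"
    by (intro nn_integral_cong) (auto simp: indicator_def)
  finally have "emeasure \<eta> ?Z = 0" by simp
  then have "AE x in \<eta>. x \<notin> ?Z" using Zs sets_ek P01_D(2)[OF kP] by (intro AE_I'[of ?Z]) auto
  then show ?thesis using pd_nonneg by (auto simp: order_le_less)
qed

lemma Kn_le1: "Kn \<eta> \<kappa> \<le> 1"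
proof -
  interpret k: prob_space \<kappa> using P01_D(1)[OF kP] .
  have m: "(\<lambda>x. ennreal (max 0 (- ln (pd \<kappa> \<eta> x)))) \<in> borel_measurable borel" using pd_meas by measurable
  have "Kn \<eta> \<kappa> = (\<integral>\<^sup>+x. ennreal (pd \<kappa> \<eta> x) * ennreal (max 0 (- ln (pd \<kappa> \<eta> x))) \<partial>\<kappa>)"
    unfolding Kn_def by (rule pd_nn[OF m])
  also have "\<dots> \<le> (\<integral>\<^sup>+x. 1 \<partial>\<kappa>)"
  proof (intro nn_integral_mono)
    fix x
    have "ennreal (pd \<kappa> \<eta> x) * ennreal (max 0 (- ln (pd \<kappa> \<eta> x))) = ennreal (pd \<kappa> \<eta> x * max 0 (- ln (pd \<kappa> \<eta> x)))"
      using pd_nonneg by (simp add: ennreal_mult)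
    also have "\<dots> \<le> 1" using plogp_le1[OF pd_nonneg] by simp
    finally show "ennreal (pd \<kappa> \<eta> x) * ennreal (max 0 (- ln (pd \<kappa> \<eta> x))) \<le> 1" .
  qed
  also have "\<dots> = 1" using k.emeasure_space_1 by simp
  finally show ?thesis .
qed


lemma Fv_le_KL:
  assumes fm: "f \<in> borel_measurable borel" and fb: "\<forall>x. \<bar>f x\<bar> \<le> C"
  shows "ereal (Fv \<eta> \<kappa> f) \<le> KL \<eta> \<kappa>"
proof -
  interpret k: prob_space \<kappa> using P01_D(1)[OF kP] .
  interpret e: prob_space \<eta> using P01_D(1)[OF eP] .
  obtain kn where kn: "Kn \<eta> \<kappa> = ennreal kn" "0 \<le> kn"
    using Kn_le1 by (cases "Kn \<eta> \<kappa>" rule: ennreal_cases) (auto simp: top_unique)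
  show ?thesis
  proof (cases "Kp \<eta> \<kappa> = \<infinity>")
    case True
    then show ?thesis using kn by (simp add: KL_ac[OF ac] enn2ereal_ennreal)
  next
    case False
    let ?l = "\<lambda>x. ln (pd \<kappa> \<eta> x)"
    have lm: "?l \<in> borel_measurable borel" using pd_meas by measurable
    have lme: "?l \<in> borel_measurable \<eta>" by (rule P01_meas[OF eP lm])
    have i1: "integrable \<eta> (\<lambda>x. max 0 (?l x))"
    proof (rule integrableI_bounded)
      show "(\<lambda>x. max 0 (?l x)) \<in> borel_measurable \<eta>" using lme by measurable
      have "(\<integral>\<^sup>+ x. ennreal (norm (max 0 (?l x))) \<partial>\<eta>) = Kp \<eta> \<kappa>" unfolding Kp_def
        by (intro nn_integral_cong) simp
      then show "(\<integral>\<^sup>+ x. ennreal (norm (max 0 (?l x))) \<partial>\<eta>) < \<infinity>" using False by (simp add: less_top)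
    qed
    have i2: "integrable \<eta> (\<lambda>x. max 0 (- ?l x))"
    proof (rule integrableI_bounded)
      show "(\<lambda>x. max 0 (- ?l x)) \<in> borel_measurable \<eta>" using lme by measurable
      have "(\<integral>\<^sup>+ x. ennreal (norm (max 0 (- ?l x))) \<partial>\<eta>) = Kn \<eta> \<kappa>" unfolding Kn_def
        by (intro nn_integral_cong) simp
      then show "(\<integral>\<^sup>+ x. ennreal (norm (max 0 (- ?l x))) \<partial>\<eta>) < \<infinity>" using kn by simp
    qed
    have Kp_eq: "Kp \<eta> \<kappa> = ennreal (\<integral>x. max 0 (?l x) \<partial>\<eta>)" unfolding Kp_def
      by (rule nn_integral_eq_integral[OF i1]) simp
    have Kn_eq: "Kn \<eta> \<kappa> = ennreal (\<integral>x. max 0 (- ?l x) \<partial>\<eta>)" unfolding Kn_def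
      by (rule nn_integral_eq_integral[OF i2]) simp
    have lsplit: "(\<lambda>x. max 0 (?l x) - max 0 (- ?l x)) = ?l" by (auto simp: fun_eq_iff max_def)
    have il: "integrable \<eta> ?l" using Bochner_Integration.integrable_diff[OF i1 i2] unfolding lsplit .
    have "(\<integral>x. ?l x \<partial>\<eta>) = (\<integral>x. max 0 (?l x) \<partial>\<eta>) - (\<integral>x. max 0 (- ?l x) \<partial>\<eta>)"
      using Bochner_Integration.integral_diff[OF i1 i2] unfolding lsplit by simp
    then have KLeq: "KL \<eta> \<kappa> = ereal (\<integral>x. ?l x \<partial>\<eta>)"
      unfolding KL_ac[OF ac] Kp_eq Kn_eq by (simp add: enn2ereal_ennreal integral_nonneg_AE)
    have fb1: "- C \<le> f x" and fb2: "f x \<le> C" for x using fb[rule_format, of x] by (auto simp: abs_le_iff)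
    define Z where "Z = (\<integral>x. exp (f x) \<partial>\<kappa>)"
    have fmk: "f \<in> borel_measurable \<kappa>" by (rule P01_meas[OF kP fm])
    have fme: "f \<in> borel_measurable \<eta>" by (rule P01_meas[OF eP fm])
    have ief: "integrable \<kappa> (\<lambda>x. exp (f x))"
      by (rule k.integrable_const_bound[where B="exp C"]) (use fb2 fmk in auto)
    have "(\<integral>x. exp (- C) \<partial>\<kappa>) \<le> Z" unfolding Z_def
      by (rule integral_mono[OF _ ief]) (use fb1 in auto)
    then have Zge: "exp (- C) \<le> Z" by (simp add: k.prob_space)
    then have Zpos: "0 < Z" using exp_gt_zero less_le_trans by blast
    have ife: "integrable \<eta> f"
      by (rule e.integrable_const_bound[where B=C]) (use fb fme in auto)
    define u where "u x = exp (f x) / (Z * pd \<kappa> \<eta> x)" for x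
    have um: "u \<in> borel_measurable borel" unfolding u_def using fm pd_meas by measurable
    have pu: "pd \<kappa> \<eta> x * u x = (if pd \<kappa> \<eta> x = 0 then 0 else exp (f x) / Z)" for x
      unfolding u_def using Zpos by auto
    have iuk: "integrable \<kappa> (\<lambda>x. pd \<kappa> \<eta> x * u x)"
    proof (rule k.integrable_const_bound[where B="exp C / Z"])
      show "AE x in \<kappa>. norm (pd \<kappa> \<eta> x * u x) \<le> exp C / Z"
      proof (rule AE_I2)
        fix x
        have "exp (f x) / Z \<le> exp C / Z" using fb2[of x] Zpos by (intro divide_right_mono) auto
        moreover have "0 \<le> exp C / Z" using Zpos by simp
        ultimately show "norm (pd \<kappa> \<eta> x * u x) \<le> exp C / Z" unfolding pu using Zpos by auto
      qed
      show "(\<lambda>x. pd \<kappa> \<eta> x * u x) \<in> borel_measurable \<kappa>"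
        using P01_meas[OF kP borel_measurable_times[OF pd_meas um]] .
    qed
    have iu: "integrable \<eta> u" using pd_int(2)[OF um] iuk by simp
    have "(\<integral>x. u x \<partial>\<eta>) = (\<integral>x. pd \<kappa> \<eta> x * u x \<partial>\<kappa>)" by (rule pd_int(1)[OF um])
    also have "\<dots> \<le> (\<integral>x. exp (f x) / Z \<partial>\<kappa>)"
      by (rule integral_mono[OF iuk]) (use ief Zpos in \<open>auto simp: pu\<close>)
    also have "\<dots> = 1" using Zpos unfolding Z_def by simp
    finally have intu: "(\<integral>x. u x \<partial>\<eta>) \<le> 1" .
    have ae: "AE x in \<eta>. f x - ln Z - ?l x \<le> u x - 1"
      using pd_pos
    proof eventually_elim
      case (elim x)
      have "ln (u x) = f x - ln Z - ?l x" unfolding u_def using elim Zpos by (simp add: ln_div ln_mult)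
      moreover have "ln (u x) \<le> u x - 1" using elim Zpos unfolding u_def by (intro ln_le_minus_one) simp
      ultimately show ?case by simp
    qed
    have i3: "integrable \<eta> (\<lambda>x. f x - ln Z - ?l x)" using ife il by simp
    have "(\<integral>x. f x - ln Z - ?l x \<partial>\<eta>) \<le> (\<integral>x. u x - 1 \<partial>\<eta>)"
      by (rule integral_mono_AE[OF i3 _ ae]) (use iu in simp)
    also have "\<dots> = (\<integral>x. u x \<partial>\<eta>) - 1" using iu by (simp add: e.prob_space)
    finally have "(\<integral>x. f x - ln Z - ?l x \<partial>\<eta>) \<le> 0" using intu by simp
    moreover have "(\<integral>x. f x - ln Z - ?l x \<partial>\<eta>) = (\<integral>x. f x \<partial>\<eta>) - ln Z - (\<integral>x. ?l x \<partial>\<eta>)"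
      using ife il by (simp add: e.prob_space)
    ultimately have "Fv \<eta> \<kappa> f \<le> (\<integral>x. ?l x \<partial>\<eta>)" unfolding Fv_def Z_def by simp
    then show ?thesis unfolding KLeq by simp
  qed
qed


lemma KL_approx_ac:
  assumes cKL: "ereal c < KL \<eta> \<kappa>"
  shows "\<exists>f C. f \<in> borel_measurable borel \<and> (\<forall>x. \<bar>f x\<bar> \<le> C) \<and> c < Fv \<eta> \<kappa> f"
proof -
  interpret k: prob_space \<kappa> using P01_D(1)[OF kP] .
  interpret e: prob_space \<eta> using P01_D(1)[OF eP] .
  obtain kn where kn: "Kn \<eta> \<kappa> = ennreal kn" "0 \<le> kn"
    using Kn_le1 by (cases "Kn \<eta> \<kappa>" rule: ennreal_cases) (auto simp: top_unique)
  let ?l = "\<lambda>x. ln (pd \<kappa> \<eta> x)"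
  have lm: "?l \<in> borel_measurable borel" using pd_meas by measurable
  have lme: "?l \<in> borel_measurable \<eta>" by (rule P01_meas[OF eP lm])
  have ck: "ereal (c + kn) < enn2ereal (Kp \<eta> \<kappa>)"
    using cKL unfolding KL_ac[OF ac] kn(1) using kn(2)
    by (cases "enn2ereal (Kp \<eta> \<kappa>)") (auto simp: enn2ereal_ennreal)
  obtain T where T: "c + kn < T" "T < 0 \<or> ennreal T < Kp \<eta> \<kappa>"
  proof (cases "Kp \<eta> \<kappa> = \<infinity>")
    case True
    show ?thesis by (rule that[of "\<bar>c + kn\<bar> + 1"]) (use True in auto)
  next
    case False
    then obtain k where k: "Kp \<eta> \<kappa> = ennreal k" "0 \<le> k" by (cases "Kp \<eta> \<kappa>" rule: ennreal_cases) auto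
    then have ck': "c + kn < k" using ck by (simp add: enn2ereal_ennreal)
    show ?thesis
    proof (rule that[of "(c + kn + k) / 2"])
      show "c + kn < (c + kn + k) / 2" using ck' by simp
      show "(c + kn + k) / 2 < 0 \<or> ennreal ((c + kn + k) / 2) < Kp \<eta> \<kappa>"
      proof (cases "(c + kn + k) / 2 < 0")
        case False
        then have "0 < k" using ck' by (simp add: not_less field_simps)
        moreover have "(c + kn + k) / 2 < k" using ck' by simp
        ultimately show ?thesis using k(1) by (simp add: ennreal_lessI)
      qed simp
    qed
  qed
  define A where "A N = (\<integral>x. min (real N) (max 0 (?l x)) \<partial>\<eta>)" for N :: nat
  define B where "B N = (\<integral>x. min (real N) (max 0 (- ?l x)) \<partial>\<eta>)" for N :: nat
  have iA: "integrable \<eta> (\<lambda>x. min (real N) (max 0 (?l x)))" for N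
    by (rule e.integrable_const_bound[where B="real N"]) (use lme in auto)
  have iB: "integrable \<eta> (\<lambda>x. min (real N) (max 0 (- ?l x)))" for N
    by (rule e.integrable_const_bound[where B="real N"]) (use lme in auto)
  have A_nn: "ennreal (A N) = (\<integral>\<^sup>+x. ennreal (min (real N) (max 0 (?l x))) \<partial>\<eta>)" for N
    unfolding A_def by (rule nn_integral_eq_integral[OF iA, symmetric]) simp
  have A0: "0 \<le> A N" for N unfolding A_def by (rule integral_nonneg_AE) simp
  have ev1: "eventually (\<lambda>N. T < A N) sequentially"
  proof (cases "T < 0")
    case True then show ?thesis using A0 by (intro always_eventually allI) (meson less_le_trans)
  next
    case False
    then have T0: "0 \<le> T" and TK: "ennreal T < Kp \<eta> \<kappa>" using T(2) by auto
    have "(\<lambda>N. \<integral>\<^sup>+x. ennreal (min (real N) (max 0 (?l x))) \<partial>\<eta>) \<longlonglongrightarrow> Kp \<eta> \<kappa>"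
      unfolding Kp_def
    proof (rule nn_integral_LIMSEQ)
      show "incseq (\<lambda>N x. ennreal (min (real N) (max 0 (?l x))))"
        by (auto simp: incseq_def le_fun_def intro!: ennreal_leI)
      show "(\<lambda>x. ennreal (min (real N) (max 0 (?l x)))) \<in> borel_measurable \<eta>" for N using lme by measurable
      fix x
      obtain N0 :: nat where N0: "max 0 (?l x) \<le> real N0" using real_arch_simple by blast
      have "eventually (\<lambda>N. ennreal (min (real N) (max 0 (?l x))) = ennreal (max 0 (?l x))) sequentially"
        unfolding eventually_sequentially
      proof (intro exI[of _ N0] allI impI)
        fix n assume "N0 \<le> n"
        then have "max 0 (?l x) \<le> real n" using N0 by (meson of_nat_le_iff order_trans)
        then show "ennreal (min (real n) (max 0 (?l x))) = ennreal (max 0 (?l x))" by (simp add: min_absorb2)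
      qed
      then show "(\<lambda>N. ennreal (min (real N) (max 0 (?l x)))) \<longlonglongrightarrow> ennreal (max 0 (?l x))"
        by (rule tendsto_eventually)
    qed
    from order_tendstoD(1)[OF this TK] show ?thesis
      by eventually_elim (use T0 in \<open>simp add: A_nn[symmetric] ennreal_less_iff\<close>)
  qed
  define \<delta> where "\<delta> = T - (c + kn)"
  have \<delta>: "0 < \<delta>" unfolding \<delta>_def using T by simp
  obtain N1 :: nat where N1: "1 / \<delta> < real N1" using reals_Archimedean2 by blast
  have ev2: "eventually (\<lambda>N. exp (- real N) < \<delta>) sequentially"
    unfolding eventually_sequentially
  proof (intro exI[of _ N1] allI impI)
    fix N assume "N1 \<le> N"
    then have "1 / \<delta> < 1 + real N" using N1 by linarith
    moreover have "1 + real N \<le> exp (real N)" by (rule exp_ge_add_one_self)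
    ultimately have "1 / \<delta> < exp (real N)" by linarith
    then have "1 < \<delta> * exp (real N)" using \<delta> by (simp add: field_simps)
    then show "exp (- real N) < \<delta>" using \<delta> by (simp add: exp_minus field_simps)
  qed
  from eventually_conj[OF ev1 ev2] obtain N where N: "T < A N" "exp (- real N) < \<delta>"
    by (auto simp: eventually_sequentially)
  define f where "f x = (if pd \<kappa> \<eta> x = 0 then - real N else max (- real N) (min (real N) (?l x)))" for x
  have fm: "f \<in> borel_measurable borel" unfolding f_def using pd_meas lm by measurable
  have fb: "\<forall>x. \<bar>f x\<bar> \<le> real N" unfolding f_def by auto
  have fb1: "- real N \<le> f x" and fb2: "f x \<le> real N" for x using fb[rule_format, of x] by (auto simp: abs_le_iff)
  have fmk: "f \<in> borel_measurable \<kappa>" by (rule P01_meas[OF kP fm])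
  have ief: "integrable \<kappa> (\<lambda>x. exp (f x))"
    by (rule k.integrable_const_bound[where B="exp (real N)"]) (use fb fmk in \<open>auto simp: abs_le_iff\<close>)
  have expf: "exp (f x) \<le> pd \<kappa> \<eta> x + exp (- real N)" for x
  proof (cases "pd \<kappa> \<eta> x = 0")
    case True then show ?thesis unfolding f_def by simp
  next
    case False
    then have p: "0 < pd \<kappa> \<eta> x" using pd_nonneg[of x] by simp
    have "exp (max (- real N) (min (real N) (?l x))) \<le> exp (- real N) + exp (min (real N) (?l x))"
      by (simp add: max_def)
    also have "exp (min (real N) (?l x)) \<le> exp (?l x)" by simp
    also have "exp (?l x) = pd \<kappa> \<eta> x" using p by simp
    finally show ?thesis unfolding f_def using False by simp
  qed
  define Z where "Z = (\<integral>x. exp (f x) \<partial>\<kappa>)"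
  have "Z \<le> (\<integral>x. pd \<kappa> \<eta> x + exp (- real N) \<partial>\<kappa>)" unfolding Z_def
    by (rule integral_mono[OF ief]) (use pd_total(1) expf in auto)
  also have "\<dots> = 1 + exp (- real N)" using pd_total by (simp add: k.prob_space)
  finally have Zle: "Z \<le> 1 + exp (- real N)" .
  have "(\<integral>x. exp (- real N) \<partial>\<kappa>) \<le> Z" unfolding Z_def
    by (rule integral_mono[OF _ ief]) (use fb1 in auto)
  then have "exp (- real N) \<le> Z" by (simp add: k.prob_space)
  then have Zpos: "0 < Z" using exp_gt_zero less_le_trans by blast
  have "ln Z \<le> ln (1 + exp (- real N))" using Zle Zpos by simp
  also have "\<dots> \<le> exp (- real N)" by (rule ln_add_one_self_le_self) simp
  finally have lnZ: "ln Z \<le> exp (- real N)" .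
  have feq: "AE x in \<eta>. f x = min (real N) (max 0 (?l x)) - min (real N) (max 0 (- ?l x))"
    using pd_pos
  proof eventually_elim
    case (elim x)
    have "f x = max (- real N) (min (real N) (?l x))" unfolding f_def using elim by simp
    also have "\<dots> = min (real N) (max 0 (?l x)) - min (real N) (max 0 (- ?l x))" by (rule clamp_split) simp
    finally show ?case .
  qed
  have "(\<integral>x. f x \<partial>\<eta>) = (\<integral>x. min (real N) (max 0 (?l x)) - min (real N) (max 0 (- ?l x)) \<partial>\<eta>)"
    by (rule integral_cong_AE[OF P01_meas[OF eP fm] _ feq]) (use lme in measurable)
  also have "\<dots> = A N - B N" unfolding A_def B_def by (rule Bochner_Integration.integral_diff[OF iA iB])
  finally have intf: "(\<integral>x. f x \<partial>\<eta>) = A N - B N" .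
  have "ennreal (B N) = (\<integral>\<^sup>+x. ennreal (min (real N) (max 0 (- ?l x))) \<partial>\<eta>)"
    unfolding B_def by (rule nn_integral_eq_integral[OF iB, symmetric]) simp
  also have "\<dots> \<le> Kn \<eta> \<kappa>" unfolding Kn_def by (intro nn_integral_mono ennreal_leI) (simp add: min_le_iff_disj)
  finally have "B N \<le> kn" using kn by (simp add: ennreal_le_iff)
  then have "c < Fv \<eta> \<kappa> f" unfolding Fv_def intf Z_def[symmetric] using N lnZ \<delta>_def by linarith
  then show ?thesis using fm fb by blast
qed

end

lemma KL_approx_nac:
  assumes eP: "\<eta> \<in> P01" and kP: "\<kappa> \<in> P01" and nac: "\<not> absolutely_continuous \<kappa> \<eta>"
  shows "\<exists>f C. f \<in> borel_measurable borel \<and> (\<forall>x. \<bar>f x\<bar> \<le> C) \<and> c < Fv \<eta> \<kappa> f"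
proof -
  interpret k: prob_space \<kappa> using P01_D(1)[OF kP] .
  interpret e: prob_space \<eta> using P01_D(1)[OF eP] .
  obtain N where N: "N \<in> null_sets \<kappa>" "N \<notin> null_sets \<eta>" using nac unfolding absolutely_continuous_def by blast
  have Ns: "N \<in> sets borel" using N(1) P01_D(2)[OF kP] by (auto simp: null_sets_def)
  have Ne: "N \<in> sets \<eta>" using Ns P01_D(2)[OF eP] by simp
  have "emeasure \<eta> N \<noteq> 0" using N(2) Ne by (auto simp: null_sets_def)
  then have a: "0 < measure \<eta> N" using Ne by (simp add: e.emeasure_eq_measure zero_less_measure_iff)
  define C where "C = (\<bar>c\<bar> + 1) / measure \<eta> N"
  have C: "0 < C" unfolding C_def using a by simp
  define f where "f x = C * indicator N x" for x
  have fm: "f \<in> borel_measurable borel" unfolding f_def using Ns by measurable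
  have fb: "\<forall>x. \<bar>f x\<bar> \<le> C" unfolding f_def using C by (auto simp: indicator_def)
  have i1: "(\<integral>x. f x \<partial>\<eta>) = C * measure \<eta> N" unfolding f_def using Ne by simp
  have "AE x in \<kappa>. x \<notin> N" using AE_not_in[OF N(1)] .
  then have "AE x in \<kappa>. exp (f x) = 1" by eventually_elim (simp add: f_def)
  then have "(\<integral>x. exp (f x) \<partial>\<kappa>) = (\<integral>x. 1 \<partial>\<kappa>)"
    by (intro integral_cong_AE) (use P01_meas[OF kP fm] in auto)
  then have i2: "(\<integral>x. exp (f x) \<partial>\<kappa>) = 1" by (simp add: k.prob_space)
  have "C * measure \<eta> N = \<bar>c\<bar> + 1" unfolding C_def using a by simp
  then have "c < Fv \<eta> \<kappa> f" unfolding Fv_def i1 i2 by simp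
  then show ?thesis using fm fb by blast
qed

lemma KL_approx:
  assumes eP: "\<eta> \<in> P01" and kP: "\<kappa> \<in> P01" and cKL: "ereal c < KL \<eta> \<kappa>"
  shows "\<exists>f C. f \<in> borel_measurable borel \<and> (\<forall>x. \<bar>f x\<bar> \<le> C) \<and> c < Fv \<eta> \<kappa> f"
  using KL_approx_ac[OF eP kP _ cKL] KL_approx_nac[OF eP kP] by blast




lemma regular_KU:
  assumes MP: "M \<in> P01" and A: "A \<in> sets borel" and d: "0 < \<delta>"
  shows "\<exists>K U. compact K \<and> open U \<and> K \<subseteq> A \<and> A \<subseteq> U \<and> measure M (U - K) < \<delta>"
proof -
  interpret prob_space M using P01_D(1)[OF MP] .
  have sb: "sets M = sets borel" using P01_D(2)[OF MP] .
  have fin: "emeasure M (space M) \<noteq> \<infinity>" by simp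
  have inner: "emeasure M A = (SUP K \<in> {K. K \<subseteq> A \<and> compact K}. emeasure M K)"
    by (rule inner_regular[OF sb fin A])
  have outer: "emeasure M A = (INF U \<in> {U. A \<subseteq> U \<and> open U}. emeasure M U)"
    by (rule outer_regular[OF sb fin A])
  have d2: "0 < \<delta> / 2" using d by simp
  obtain K where K: "K \<subseteq> A" "compact K" "emeasure M A < emeasure M K + ennreal (\<delta> / 2)"
    using SUP_approx_ennreal[OF d2 _ inner] by fastforce
  obtain U where U: "A \<subseteq> U" "open U" "emeasure M U < emeasure M A + ennreal (\<delta> / 2)"
    using INF_approx_ennreal[OF d2 outer] by fastforce
  have Ks: "K \<in> sets M" using K(2) sb by (simp add: compact_imp_closed)
  have Us: "U \<in> sets M" using U(2) sb by simp
  have As: "A \<in> sets M" using A sb by simp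
  have "ennreal (measure M A) < ennreal (measure M K + \<delta> / 2)"
    using K(3) d by (simp add: emeasure_eq_measure ennreal_plus[symmetric] del: ennreal_plus)
  then have m1: "measure M A < measure M K + \<delta> / 2" using ennreal_less_iff[OF measure_nonneg] by blast
  have "ennreal (measure M U) < ennreal (measure M A + \<delta> / 2)"
    using U(3) d by (simp add: emeasure_eq_measure ennreal_plus[symmetric] del: ennreal_plus)
  then have m2: "measure M U < measure M A + \<delta> / 2" using ennreal_less_iff[OF measure_nonneg] by blast
  have "measure M (U - K) = measure M U - measure M K"
    using K(1) U(1) Ks Us by (intro finite_measure_Diff) auto
  then have "measure M (U - K) < \<delta>" using m1 m2 by simp
  then show ?thesis using K U by blast
qed

definition apx :: "real measure \<Rightarrow> real measure \<Rightarrow> (real \<Rightarrow> real) \<Rightarrow> bool" where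
  "apx \<eta> \<kappa> f \<longleftrightarrow> (\<forall>\<epsilon>>0. \<exists>g. continuous_on UNIV g \<and>
      (\<integral>\<^sup>+x. ennreal \<bar>g x - f x\<bar> \<partial>\<eta>) \<le> ennreal \<epsilon> \<and> (\<integral>\<^sup>+x. ennreal \<bar>g x - f x\<bar> \<partial>\<kappa>) \<le> ennreal \<epsilon>)"

context
  fixes \<eta> \<kappa> :: "real measure"
  assumes eP: "\<eta> \<in> P01" and kP: "\<kappa> \<in> P01"
begin

lemma apx_indicator:
  assumes A: "A \<in> sets borel"
  shows "apx \<eta> \<kappa> (indicator A)"
  unfolding apx_def
proof (intro allI impI)
  fix \<epsilon> :: real assume e: "0 < \<epsilon>"
  obtain K1 U1 where KU1: "compact K1" "open U1" "K1 \<subseteq> A" "A \<subseteq> U1" "measure \<eta> (U1 - K1) < \<epsilon>"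
    using regular_KU[OF eP A e] by blast
  obtain K2 U2 where KU2: "compact K2" "open U2" "K2 \<subseteq> A" "A \<subseteq> U2" "measure \<kappa> (U2 - K2) < \<epsilon>"
    using regular_KU[OF kP A e] by blast
  define K where "K = K1 \<union> K2"
  define U where "U = U1 \<inter> U2"
  have KU: "compact K" "open U" "K \<subseteq> A" "A \<subseteq> U" using KU1 KU2 unfolding K_def U_def by auto
  obtain g :: "real \<Rightarrow> real" where g: "continuous_on UNIV g" "\<And>x. g x \<in> closed_segment 0 1"
    "\<And>x. x \<in> - U \<Longrightarrow> g x = 0" "\<And>x. x \<in> K \<Longrightarrow> g x = 1"
    using Urysohn[of "- U" K 0 1] KU by (auto simp: compact_imp_closed closed_Compl)
  have g01: "0 \<le> g x \<and> g x \<le> 1" for x using g(2)[of x] by (simp add: closed_segment_eq_real_ivl1)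
  have bnd: "ennreal \<bar>g x - indicator A x\<bar> \<le> indicator (U - K) x" for x
  proof (cases "x \<in> K")
    case True then show ?thesis using g(4) KU by (auto simp: indicator_def)
  next
    case nK: False
    show ?thesis
    proof (cases "x \<in> U")
      case False then show ?thesis using g(3) KU by (auto simp: indicator_def)
    next
      case True then show ?thesis using nK g01[of x] by (auto simp: indicator_def)
    qed
  qed
  have UKs: "U - K \<in> sets borel" using KU by (auto simp: compact_imp_closed)
  have est: "(\<integral>\<^sup>+x. ennreal \<bar>g x - indicator A x\<bar> \<partial>M) \<le> ennreal \<epsilon>"
    if MP: "M \<in> P01" and sub: "U - K \<subseteq> U' - K'" and U'K': "U' - K' \<in> sets borel" and m: "measure M (U' - K') < \<epsilon>" for M U' K'
  proof -
    interpret prob_space M using P01_D(1)[OF MP] .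
    have "(\<integral>\<^sup>+x. ennreal \<bar>g x - indicator A x\<bar> \<partial>M) \<le> (\<integral>\<^sup>+x. indicator (U - K) x \<partial>M)"
      by (intro nn_integral_mono bnd)
    also have "\<dots> = emeasure M (U - K)" using UKs P01_D(2)[OF MP] by simp
    also have "\<dots> \<le> emeasure M (U' - K')" using sub U'K' P01_D(2)[OF MP] by (intro emeasure_mono) auto
    also have "\<dots> = ennreal (measure M (U' - K'))" by (simp add: emeasure_eq_measure)
    also have "\<dots> \<le> ennreal \<epsilon>" using m by (intro ennreal_leI) simp
    finally show ?thesis .
  qed
  have "U - K \<subseteq> U1 - K1" "U - K \<subseteq> U2 - K2" unfolding U_def K_def by auto
  moreover have "U1 - K1 \<in> sets borel" "U2 - K2 \<in> sets borel" using KU1 KU2 by (auto simp: compact_imp_closed)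
  ultimately show "\<exists>g. continuous_on UNIV g \<and> (\<integral>\<^sup>+x. ennreal \<bar>g x - indicator A x\<bar> \<partial>\<eta>) \<le> ennreal \<epsilon> \<and>
      (\<integral>\<^sup>+x. ennreal \<bar>g x - indicator A x\<bar> \<partial>\<kappa>) \<le> ennreal \<epsilon>"
    using est[OF eP _ _ KU1(5)] est[OF kP _ _ KU2(5)] g(1) by blast
qed

end


lemma absdiff_meas:
  assumes "M \<in> P01" "f \<in> borel_measurable borel" "h \<in> borel_measurable borel"
  shows "(\<lambda>x. ennreal \<bar>h x - f x\<bar>) \<in> borel_measurable M"
  by (rule P01_meas[OF assms(1)]) (use assms(2,3) in measurable)

lemma nn_absdiff_add:
  assumes MP: "M \<in> P01" and m: "f1 \<in> borel_measurable borel" "f2 \<in> borel_measurable borel"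
    "g1 \<in> borel_measurable borel" "g2 \<in> borel_measurable borel"
    and b1: "(\<integral>\<^sup>+x. ennreal \<bar>g1 x - f1 x\<bar> \<partial>M) \<le> a"
    and b2: "(\<integral>\<^sup>+x. ennreal \<bar>g2 x - f2 x\<bar> \<partial>M) \<le> b"
  shows "(\<integral>\<^sup>+x. ennreal \<bar>(g1 x + g2 x) - (f1 x + f2 x)\<bar> \<partial>M) \<le> a + b"
proof -
  have "(\<integral>\<^sup>+x. ennreal \<bar>(g1 x + g2 x) - (f1 x + f2 x)\<bar> \<partial>M)
      \<le> (\<integral>\<^sup>+x. ennreal \<bar>g1 x - f1 x\<bar> + ennreal \<bar>g2 x - f2 x\<bar> \<partial>M)"
  proof (intro nn_integral_mono)
    fix x
    have "\<bar>(g1 x + g2 x) - (f1 x + f2 x)\<bar> \<le> \<bar>g1 x - f1 x\<bar> + \<bar>g2 x - f2 x\<bar>" by simp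
    then show "ennreal \<bar>(g1 x + g2 x) - (f1 x + f2 x)\<bar> \<le> ennreal \<bar>g1 x - f1 x\<bar> + ennreal \<bar>g2 x - f2 x\<bar>"
      by (simp add: ennreal_plus[symmetric] del: ennreal_plus)
  qed
  also have "\<dots> = (\<integral>\<^sup>+x. ennreal \<bar>g1 x - f1 x\<bar> \<partial>M) + (\<integral>\<^sup>+x. ennreal \<bar>g2 x - f2 x\<bar> \<partial>M)"
    by (rule nn_integral_add) (use absdiff_meas[OF MP] m in auto)
  also have "\<dots> \<le> a + b" using b1 b2 by (rule add_mono)
  finally show ?thesis .
qed

context
  fixes \<eta> \<kappa> :: "real measure"
  assumes eP: "\<eta> \<in> P01" and kP: "\<kappa> \<in> P01"
begin

lemma apx_add:
  assumes m: "f1 \<in> borel_measurable borel" "f2 \<in> borel_measurable borel"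
    and a: "apx \<eta> \<kappa> f1" "apx \<eta> \<kappa> f2"
  shows "apx \<eta> \<kappa> (\<lambda>x. f1 x + f2 x)"
  unfolding apx_def
proof (intro allI impI)
  fix \<epsilon> :: real assume e: "0 < \<epsilon>"
  then have e2: "0 < \<epsilon> / 2" by simp
  obtain g1 where g1: "continuous_on UNIV g1" "(\<integral>\<^sup>+x. ennreal \<bar>g1 x - f1 x\<bar> \<partial>\<eta>) \<le> ennreal (\<epsilon>/2)"
      "(\<integral>\<^sup>+x. ennreal \<bar>g1 x - f1 x\<bar> \<partial>\<kappa>) \<le> ennreal (\<epsilon>/2)"
    using a(1) e2 unfolding apx_def by blast
  obtain g2 where g2: "continuous_on UNIV g2" "(\<integral>\<^sup>+x. ennreal \<bar>g2 x - f2 x\<bar> \<partial>\<eta>) \<le> ennreal (\<epsilon>/2)"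
      "(\<integral>\<^sup>+x. ennreal \<bar>g2 x - f2 x\<bar> \<partial>\<kappa>) \<le> ennreal (\<epsilon>/2)"
    using a(2) e2 unfolding apx_def by blast
  have gm: "g1 \<in> borel_measurable borel" "g2 \<in> borel_measurable borel"
    using g1(1) g2(1) by (auto intro: borel_measurable_continuous_onI)
  have ee: "ennreal (\<epsilon>/2) + ennreal (\<epsilon>/2) = ennreal \<epsilon>" using e by (simp add: ennreal_plus[symmetric] del: ennreal_plus)
  show "\<exists>g. continuous_on UNIV g \<and> (\<integral>\<^sup>+x. ennreal \<bar>g x - (f1 x + f2 x)\<bar> \<partial>\<eta>) \<le> ennreal \<epsilon> \<and>
      (\<integral>\<^sup>+x. ennreal \<bar>g x - (f1 x + f2 x)\<bar> \<partial>\<kappa>) \<le> ennreal \<epsilon>"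
  proof (intro exI conjI)
    show "continuous_on UNIV (\<lambda>x. g1 x + g2 x)" using g1(1) g2(1) by (intro continuous_intros)
    show "(\<integral>\<^sup>+x. ennreal \<bar>(g1 x + g2 x) - (f1 x + f2 x)\<bar> \<partial>\<eta>) \<le> ennreal \<epsilon>"
      using nn_absdiff_add[OF eP m gm g1(2) g2(2)] ee by simp
    show "(\<integral>\<^sup>+x. ennreal \<bar>(g1 x + g2 x) - (f1 x + f2 x)\<bar> \<partial>\<kappa>) \<le> ennreal \<epsilon>"
      using nn_absdiff_add[OF kP m gm g1(3) g2(3)] ee by simp
  qed
qed

lemma apx_zero: "apx \<eta> \<kappa> (\<lambda>x. 0)"
  unfolding apx_def by (intro allI impI exI[of _ "\<lambda>x. 0"]) auto

lemma apx_cmult: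
  assumes m: "f \<in> borel_measurable borel" and a: "apx \<eta> \<kappa> f"
  shows "apx \<eta> \<kappa> (\<lambda>x. c * f x)"
proof (cases "c = 0")
  case True then show ?thesis using apx_zero by simp
next
  case False
  then have c: "0 < \<bar>c\<bar>" by simp
  show ?thesis unfolding apx_def
  proof (intro allI impI)
    fix \<epsilon> :: real assume e: "0 < \<epsilon>"
    then have e2: "0 < \<epsilon> / \<bar>c\<bar>" using c by simp
    obtain g where g: "continuous_on UNIV g" "(\<integral>\<^sup>+x. ennreal \<bar>g x - f x\<bar> \<partial>\<eta>) \<le> ennreal (\<epsilon>/\<bar>c\<bar>)"
        "(\<integral>\<^sup>+x. ennreal \<bar>g x - f x\<bar> \<partial>\<kappa>) \<le> ennreal (\<epsilon>/\<bar>c\<bar>)"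
      using a e2 unfolding apx_def by blast
    have gm: "g \<in> borel_measurable borel" using g(1) by (auto intro: borel_measurable_continuous_onI)
    have est: "(\<integral>\<^sup>+x. ennreal \<bar>c * g x - c * f x\<bar> \<partial>M) \<le> ennreal \<epsilon>"
      if MP: "M \<in> P01" and b: "(\<integral>\<^sup>+x. ennreal \<bar>g x - f x\<bar> \<partial>M) \<le> ennreal (\<epsilon>/\<bar>c\<bar>)" for M
    proof -
      have "(\<integral>\<^sup>+x. ennreal \<bar>c * g x - c * f x\<bar> \<partial>M) = (\<integral>\<^sup>+x. ennreal \<bar>c\<bar> * ennreal \<bar>g x - f x\<bar> \<partial>M)"
        by (intro nn_integral_cong) (simp add: ennreal_mult[symmetric] abs_mult right_diff_distrib[symmetric] del: ennreal_mult)
      also have "\<dots> = ennreal \<bar>c\<bar> * (\<integral>\<^sup>+x. ennreal \<bar>g x - f x\<bar> \<partial>M)"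
        by (rule nn_integral_cmult) (rule absdiff_meas[OF MP m gm])
      also have "\<dots> \<le> ennreal \<bar>c\<bar> * ennreal (\<epsilon>/\<bar>c\<bar>)" using b by (rule mult_left_mono) simp
      also have "\<dots> = ennreal (\<bar>c\<bar> * (\<epsilon>/\<bar>c\<bar>))" using c e by (subst ennreal_mult) auto
      also have "\<dots> = ennreal \<epsilon>" using c by simp
      finally show ?thesis .
    qed
    show "\<exists>g. continuous_on UNIV g \<and> (\<integral>\<^sup>+x. ennreal \<bar>g x - c * f x\<bar> \<partial>\<eta>) \<le> ennreal \<epsilon> \<and>
      (\<integral>\<^sup>+x. ennreal \<bar>g x - c * f x\<bar> \<partial>\<kappa>) \<le> ennreal \<epsilon>"
      by (intro exI[of _ "\<lambda>x. c * g x"] conjI est eP kP g(2,3)) (use g(1) in \<open>intro continuous_intros\<close>)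
  qed
qed

lemma apx_sum:
  assumes "finite I" "\<And>i. i \<in> I \<Longrightarrow> f i \<in> borel_measurable borel" "\<And>i. i \<in> I \<Longrightarrow> apx \<eta> \<kappa> (f i)"
  shows "apx \<eta> \<kappa> (\<lambda>x. \<Sum>i\<in>I. f i x)"
  using assms
proof (induction I rule: finite_induct)
  case empty then show ?case using apx_zero by simp
next
  case (insert i I)
  have "apx \<eta> \<kappa> (\<lambda>x. f i x + (\<Sum>i\<in>I. f i x))"
    by (rule apx_add) (use insert in auto)
  then show ?case using insert by simp
qed

lemma apx_unif:
  assumes m: "f \<in> borel_measurable borel"
    and u: "\<And>\<delta>. 0 < \<delta> \<Longrightarrow> \<exists>s. s \<in> borel_measurable borel \<and> apx \<eta> \<kappa> s \<and> (\<forall>x. \<bar>s x - f x\<bar> \<le> \<delta>)"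
  shows "apx \<eta> \<kappa> f"
  unfolding apx_def
proof (intro allI impI)
  fix \<epsilon> :: real assume e: "0 < \<epsilon>"
  then have e2: "0 < \<epsilon> / 2" by simp
  obtain s where s: "s \<in> borel_measurable borel" "apx \<eta> \<kappa> s" "\<forall>x. \<bar>s x - f x\<bar> \<le> \<epsilon>/2" using u[OF e2] by blast
  obtain g where g: "continuous_on UNIV g" "(\<integral>\<^sup>+x. ennreal \<bar>g x - s x\<bar> \<partial>\<eta>) \<le> ennreal (\<epsilon>/2)"
      "(\<integral>\<^sup>+x. ennreal \<bar>g x - s x\<bar> \<partial>\<kappa>) \<le> ennreal (\<epsilon>/2)"
    using s(2) e2 unfolding apx_def by blast
  have gm: "g \<in> borel_measurable borel" using g(1) by (auto intro: borel_measurable_continuous_onI)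
  have ee: "ennreal (\<epsilon>/2) + ennreal (\<epsilon>/2) = ennreal \<epsilon>" using e by (simp add: ennreal_plus[symmetric] del: ennreal_plus)
  have est: "(\<integral>\<^sup>+x. ennreal \<bar>g x - f x\<bar> \<partial>M) \<le> ennreal \<epsilon>"
    if MP: "M \<in> P01" and b: "(\<integral>\<^sup>+x. ennreal \<bar>g x - s x\<bar> \<partial>M) \<le> ennreal (\<epsilon>/2)" for M
  proof -
    interpret prob_space M using P01_D(1)[OF MP] .
    have "(\<integral>\<^sup>+x. ennreal \<bar>g x - f x\<bar> \<partial>M) = (\<integral>\<^sup>+x. ennreal \<bar>(g x + 0) - (s x + (f x - s x))\<bar> \<partial>M)"
      by simp
    also have "\<dots> \<le> ennreal (\<epsilon>/2) + ennreal (\<epsilon>/2)"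
    proof (rule nn_absdiff_add[OF MP s(1) _ gm _ b])
      show "(\<lambda>x. f x - s x) \<in> borel_measurable borel" using m s(1) by measurable
      show "(\<lambda>x. 0::real) \<in> borel_measurable borel" by simp
      have "(\<integral>\<^sup>+x. ennreal \<bar>0 - (f x - s x)\<bar> \<partial>M) \<le> (\<integral>\<^sup>+x. ennreal (\<epsilon>/2) \<partial>M)"
        using s(3) by (intro nn_integral_mono ennreal_leI) (simp add: abs_minus_commute)
      also have "\<dots> = ennreal (\<epsilon>/2)" by (simp add: emeasure_space_1)
      finally show "(\<integral>\<^sup>+x. ennreal \<bar>0 - (f x - s x)\<bar> \<partial>M) \<le> ennreal (\<epsilon>/2)" .
    qed
    finally show ?thesis using ee by simp
  qed
  show "\<exists>g. continuous_on UNIV g \<and> (\<integral>\<^sup>+x. ennreal \<bar>g x - f x\<bar> \<partial>\<eta>) \<le> ennreal \<epsilon> \<and>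
      (\<integral>\<^sup>+x. ennreal \<bar>g x - f x\<bar> \<partial>\<kappa>) \<le> ennreal \<epsilon>"
    using est[OF eP g(2)] est[OF kP g(3)] g(1) by blast
qed

end


context
  fixes \<eta> \<kappa> :: "real measure"
  assumes eP: "\<eta> \<in> P01" and kP: "\<kappa> \<in> P01"
begin

lemma apx_bounded:
  assumes m: "f \<in> borel_measurable borel" and b: "\<forall>x. \<bar>f x\<bar> \<le> C"
  shows "apx \<eta> \<kappa> f"
proof (rule apx_unif[OF eP kP m])
  fix \<delta> :: real assume d: "0 < \<delta>"
  have C0: "0 \<le> C" using b[rule_format, of 0] by simp
  define K :: int where "K = \<lceil>C / \<delta>\<rceil> + 1"
  define S where "S = {-K..K}"
  define A where "A k = {x. \<lfloor>f x / \<delta>\<rfloor> = k}" for k :: int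
  define s where "s x = (\<Sum>k\<in>S. (\<delta> * real_of_int k) * indicator (A k) x)" for x
  have fd: "(\<lambda>x. f x / \<delta>) \<in> borel_measurable borel" using m by measurable
  have As: "A k \<in> sets borel" for k
  proof -
    have "A k = (\<lambda>x. f x / \<delta>) -` {real_of_int k ..< real_of_int k + 1} \<inter> space borel"
      unfolding A_def by (auto simp: floor_eq_iff)
    also have "\<dots> \<in> sets borel" by (rule measurable_sets[OF fd]) simp
    finally show ?thesis .
  qed
  have tm: "(\<lambda>x. \<delta> * real_of_int k * indicator (A k) x) \<in> borel_measurable borel" for k
    by (rule borel_measurable_times[OF borel_measurable_const borel_measurable_indicator[OF As]])
  have sm: "s \<in> borel_measurable borel" unfolding s_def by (rule borel_measurable_sum) (rule tm)
  have "apx \<eta> \<kappa> s" unfolding s_def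
  proof (rule apx_sum[OF eP kP])
    show "finite S" unfolding S_def by simp
    fix k assume "k \<in> S"
    show "(\<lambda>x. \<delta> * real_of_int k * indicator (A k) x) \<in> borel_measurable borel" by (rule tm)
    show "apx \<eta> \<kappa> (\<lambda>x. \<delta> * real_of_int k * indicator (A k) x)"
      by (rule apx_cmult[OF eP kP]) (use As apx_indicator[OF eP kP] in auto)
  qed
  moreover have "\<bar>s x - f x\<bar> \<le> \<delta>" for x
  proof -
    define m where "m = \<lfloor>f x / \<delta>\<rfloor>"
    have "- C \<le> f x" "f x \<le> C" using b[rule_format, of x] by (auto simp: abs_le_iff)
    then have "- (C / \<delta>) \<le> f x / \<delta>" "f x / \<delta> \<le> C / \<delta>" using d by (simp_all add: field_simps)
    have fl: "real_of_int m \<le> f x / \<delta>" "f x / \<delta> < real_of_int m + 1" using floor_correct[of "f x / \<delta>"] unfolding m_def by auto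
    have ce: "C / \<delta> \<le> real_of_int \<lceil>C / \<delta>\<rceil>" using ceiling_correct[of "C / \<delta>"] by auto
    have "real_of_int m < real_of_int K" unfolding K_def of_int_add of_int_1 using fl ce \<open>f x / \<delta> \<le> C / \<delta>\<close> by linarith
    moreover have "real_of_int (- K) < real_of_int m" unfolding K_def of_int_minus of_int_add of_int_1 using fl ce \<open>- (C / \<delta>) \<le> f x / \<delta>\<close> by linarith
    ultimately have "m \<le> K" "- K \<le> m" unfolding of_int_less_iff by simp_all
    then have mS: "m \<in> S" unfolding S_def by simp
    have "s x = (\<Sum>k\<in>S. if k = m then \<delta> * real_of_int k else 0)"
      unfolding s_def A_def m_def by (intro sum.cong) (auto simp: indicator_def)
    also have "\<dots> = \<delta> * real_of_int m" using mS by (simp add: sum.delta' S_def)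
    finally have sx: "s x = \<delta> * real_of_int m" .
    from fl have "\<delta> * real_of_int m \<le> f x" "f x < \<delta> * real_of_int m + \<delta>" using d by (simp_all add: field_simps)
    then show ?thesis unfolding sx by simp
  qed
  ultimately show "\<exists>s. s \<in> borel_measurable borel \<and> apx \<eta> \<kappa> s \<and> (\<forall>x. \<bar>s x - f x\<bar> \<le> \<delta>)"
    using sm by blast
qed

end




lemma Z_lower:
  fixes g :: "real \<Rightarrow> real"
  assumes MP: "M \<in> P01" and gm: "g \<in> borel_measurable borel" and gb: "\<forall>x. \<bar>g x\<bar> \<le> C"
  shows "integrable M (\<lambda>x. exp (g x))" "exp (- C) \<le> (\<integral>x. exp (g x) \<partial>M)"
proof -
  interpret prob_space M using P01_D(1)[OF MP] .
  have g1: "- C \<le> g x" for x using abs_le_D2[OF gb[rule_format, of x]] by linarith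
  have g2: "g x \<le> C" for x using abs_le_D1[OF gb[rule_format, of x]] .
  show ie: "integrable M (\<lambda>x. exp (g x))"
    by (rule integrable_const_bound[where B="exp C"]) (use g2 P01_meas[OF MP gm] in auto)
  have "(\<integral>x. exp (- C) \<partial>M) \<le> (\<integral>x. exp (g x) \<partial>M)"
    by (rule integral_mono[OF _ ie]) (use g1 in auto)
  then show "exp (- C) \<le> (\<integral>x. exp (g x) \<partial>M)" by (simp add: prob_space)
qed

lemma absdiff_int_bound:
  fixes f g :: "real \<Rightarrow> real"
  assumes MP: "M \<in> P01" and fm: "f \<in> borel_measurable borel" and gm: "g \<in> borel_measurable borel"
    and fb: "\<forall>x. \<bar>f x\<bar> \<le> C" and gb: "\<forall>x. \<bar>g x\<bar> \<le> C"
    and nb: "(\<integral>\<^sup>+x. ennreal \<bar>g x - f x\<bar> \<partial>M) \<le> ennreal e" and e: "0 \<le> e"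
  shows "integrable M (\<lambda>x. \<bar>g x - f x\<bar>)" "(\<integral>x. \<bar>g x - f x\<bar> \<partial>M) \<le> e"
proof -
  interpret prob_space M using P01_D(1)[OF MP] .
  have b: "\<bar>g x - f x\<bar> \<le> 2 * C" for x using fb[rule_format, of x] gb[rule_format, of x] by linarith
  show i: "integrable M (\<lambda>x. \<bar>g x - f x\<bar>)"
    by (rule integrable_const_bound[where B="2 * C"]) (use b P01_meas[OF MP fm] P01_meas[OF MP gm] in auto)
  have "ennreal (\<integral>x. \<bar>g x - f x\<bar> \<partial>M) = (\<integral>\<^sup>+x. ennreal \<bar>g x - f x\<bar> \<partial>M)"
    by (rule nn_integral_eq_integral[OF i, symmetric]) simp
  also have "\<dots> \<le> ennreal e" by (rule nb)
  finally show "(\<integral>x. \<bar>g x - f x\<bar> \<partial>M) \<le> e" using e by (simp add: ennreal_le_iff)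
qed

lemma approx_cont:
  assumes eP: "\<eta> \<in> P01" and kP: "\<kappa> \<in> P01" and fm: "f \<in> borel_measurable borel"
    and fb: "\<forall>x. \<bar>f x\<bar> \<le> C" and e: "0 < \<epsilon>"
  shows "\<exists>g. continuous_on UNIV g \<and> (\<forall>x. \<bar>g x\<bar> \<le> C) \<and> Fv \<eta> \<kappa> f - \<epsilon> < Fv \<eta> \<kappa> g"
proof -
  interpret k: prob_space \<kappa> using P01_D(1)[OF kP] .
  interpret e: prob_space \<eta> using P01_D(1)[OF eP] .
  have C0: "0 \<le> C" using fb[rule_format, of 0] by simp
  have fb1: "- C \<le> f x" for x using abs_le_D2[OF fb[rule_format, of x]] by linarith
  have fb2: "f x \<le> C" for x using abs_le_D1[OF fb[rule_format, of x]] .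
  define e' where "e' = \<epsilon> / (2 * (1 + exp (2 * C)))"
  have e': "0 < e'" unfolding e'_def using e by (simp add: add_pos_pos)
  obtain g0 where g0: "continuous_on UNIV g0" "(\<integral>\<^sup>+x. ennreal \<bar>g0 x - f x\<bar> \<partial>\<eta>) \<le> ennreal e'"
      "(\<integral>\<^sup>+x. ennreal \<bar>g0 x - f x\<bar> \<partial>\<kappa>) \<le> ennreal e'"
    using apx_bounded[OF eP kP fm fb] e' unfolding apx_def by blast
  define g where "g x = max (- C) (min C (g0 x))" for x
  have gc: "continuous_on UNIV g" unfolding g_def using g0(1) by (intro continuous_intros)
  have gm: "g \<in> borel_measurable borel" using gc by (rule borel_measurable_continuous_onI)
  have gb: "\<forall>x. \<bar>g x\<bar> \<le> C" unfolding g_def using C0 by auto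
  have close: "\<bar>g x - f x\<bar> \<le> \<bar>g0 x - f x\<bar>" for x
    using fb1[of x] fb2[of x] unfolding g_def by (auto simp: max_def min_def abs_if)
  have nb: "(\<integral>\<^sup>+x. ennreal \<bar>g x - f x\<bar> \<partial>M) \<le> ennreal e'"
    if "(\<integral>\<^sup>+x. ennreal \<bar>g0 x - f x\<bar> \<partial>M) \<le> ennreal e'" for M
  proof -
    have "(\<integral>\<^sup>+x. ennreal \<bar>g x - f x\<bar> \<partial>M) \<le> (\<integral>\<^sup>+x. ennreal \<bar>g0 x - f x\<bar> \<partial>M)"
      by (intro nn_integral_mono ennreal_leI close)
    then show ?thesis using that by (rule order_trans)
  qed
  note bE = absdiff_int_bound[OF eP fm gm fb gb nb[OF g0(2)] less_imp_le[OF e']]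
  note bK = absdiff_int_bound[OF kP fm gm fb gb nb[OF g0(3)] less_imp_le[OF e']]
  have ife: "integrable \<eta> f" by (rule e.integrable_const_bound[where B=C]) (use fb P01_meas[OF eP fm] in auto)
  have ige: "integrable \<eta> g" by (rule e.integrable_const_bound[where B=C]) (use gb P01_meas[OF eP gm] in auto)
  have "(\<integral>x. f x \<partial>\<eta>) - (\<integral>x. g x \<partial>\<eta>) = (\<integral>x. f x - g x \<partial>\<eta>)"
    using ife ige by simp
  also have "\<dots> \<le> (\<integral>x. \<bar>g x - f x\<bar> \<partial>\<eta>)"
    by (rule integral_mono[OF _ bE(1)]) (use ife ige in auto)
  finally have I1: "(\<integral>x. f x \<partial>\<eta>) - e' \<le> (\<integral>x. g x \<partial>\<eta>)" using bE(2) by simp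
  define Zf where "Zf = (\<integral>x. exp (f x) \<partial>\<kappa>)"
  define Zg where "Zg = (\<integral>x. exp (g x) \<partial>\<kappa>)"
  note Zf = Z_lower[OF kP fm fb]
  note Zg = Z_lower[OF kP gm gb]
  have "Zg - Zf = (\<integral>x. exp (g x) - exp (f x) \<partial>\<kappa>)" unfolding Zf_def Zg_def using Zf(1) Zg(1) by simp
  also have "\<dots> \<le> (\<integral>x. exp C * \<bar>g x - f x\<bar> \<partial>\<kappa>)"
  proof (rule integral_mono)
    show "integrable \<kappa> (\<lambda>x. exp (g x) - exp (f x))" using Zf(1) Zg(1) by simp
    show "integrable \<kappa> (\<lambda>x. exp C * \<bar>g x - f x\<bar>)" using bK(1) by simp
    fix x
    have "\<bar>exp (g x) - exp (f x)\<bar> \<le> exp C * \<bar>g x - f x\<bar>" by (rule exp_lip) (use gb fb in auto)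
    then show "exp (g x) - exp (f x) \<le> exp C * \<bar>g x - f x\<bar>" by simp
  qed
  also have "\<dots> = exp C * (\<integral>x. \<bar>g x - f x\<bar> \<partial>\<kappa>)" by simp
  also have "\<dots> \<le> exp C * e'" using bK(2) by (intro mult_left_mono) auto
  finally have Zdiff: "Zg \<le> Zf + exp C * e'" by simp
  have Zfpos: "0 < Zf" and Zgpos: "0 < Zg" unfolding Zf_def Zg_def using Zf(2) Zg(2) exp_gt_zero less_le_trans by blast+
  define t where "t = exp C * e'"
  have t: "0 \<le> t" unfolding t_def using e' by simp
  have "0 < 1 + t / Zf" using Zfpos t by (simp add: add_pos_nonneg)
  have l1: "ln Zg \<le> ln (Zf + t)" using Zdiff Zgpos t unfolding t_def by simp
  have "Zf + t = Zf * (1 + t / Zf)" using Zfpos by (simp add: field_simps)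
  then have l2: "ln (Zf + t) = ln Zf + ln (1 + t / Zf)" using Zfpos \<open>0 < 1 + t / Zf\<close> by (simp add: ln_mult)
  have l3: "ln (1 + t / Zf) \<le> t / Zf" using Zfpos t by (intro ln_add_one_self_le_self) simp
  have l4: "t / Zf \<le> t * exp C"
  proof -
    have "1 \<le> Zf * exp C" using Zf(2) unfolding Zf_def[symmetric]
      by (metis exp_gt_zero exp_minus_inverse mult.commute mult_right_mono order_less_imp_le)
    then have "t * 1 \<le> t * (Zf * exp C)" using t by (intro mult_left_mono) auto
    then have "t \<le> Zf * (t * exp C)" by (simp add: algebra_simps)
    then show ?thesis using Zfpos by (simp add: field_simps)
  qed
  have lnA: "ln Zg \<le> ln Zf + ln (1 + t / Zf)" using l1 unfolding l2 .
  have lnB: "ln Zf + ln (1 + t / Zf) \<le> ln Zf + t * exp C" using order_trans[OF l3 l4] by (rule add_left_mono)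
  have lnZ0: "ln Zg \<le> ln Zf + t * exp C" using order_trans[OF lnA lnB] .
  have CC: "2 * C = C + C" by simp
  have e2C: "exp (2 * C) = exp C * exp C" unfolding CC by (rule exp_add)
  have "t * exp C = exp (2 * C) * e'" unfolding t_def e2C by (simp only: ac_simps)
  then have lnZ: "ln Zg \<le> ln Zf + exp (2 * C) * e'" using lnZ0 by simp
  have "Fv \<eta> \<kappa> f - (1 + exp (2 * C)) * e' \<le> Fv \<eta> \<kappa> g"
    unfolding Fv_def Zf_def[symmetric] Zg_def[symmetric] using I1 lnZ by (simp add: algebra_simps)
  moreover have "(1 + exp (2 * C)) * e' = \<epsilon> / 2"
  proof -
    have h: "0 < a \<Longrightarrow> a * (\<epsilon> / (2 * a)) = \<epsilon> / 2" for a :: real by (simp add: field_simps)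
    have "0 < 1 + exp (2 * C)" by (simp add: add_pos_pos)
    from h[OF this] show ?thesis unfolding e'_def .
  qed
  ultimately have "Fv \<eta> \<kappa> f - \<epsilon> < Fv \<eta> \<kappa> g" using e by simp
  then show ?thesis using gc gb by blast
qed


lemma Fv_conv:
  assumes wE: "wc \<eta>s \<eta>" and wK: "wc \<kappa>s \<kappa>" and kP: "\<kappa> \<in> P01"
    and gc: "continuous_on UNIV g" and gb: "\<forall>x. \<bar>g x\<bar> \<le> C"
  shows "(\<lambda>n. Fv (\<eta>s n) (\<kappa>s n) g) \<longlonglongrightarrow> Fv \<eta> \<kappa> g"
proof -
  have gm: "g \<in> borel_measurable borel" using gc by (rule borel_measurable_continuous_onI)
  have Zpos: "0 < (\<integral>x. exp (g x) \<partial>\<kappa>)" using Z_lower(2)[OF kP gm gb] exp_gt_zero less_le_trans by blast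
  have egc: "continuous_on UNIV (\<lambda>x. exp (g x))" using gc by (intro continuous_intros)
  have c1: "(\<lambda>n. \<integral>x. g x \<partial>\<eta>s n) \<longlonglongrightarrow> (\<integral>x. g x \<partial>\<eta>)" using wE gc unfolding wc_def by blast
  have c2: "(\<lambda>n. \<integral>x. exp (g x) \<partial>\<kappa>s n) \<longlonglongrightarrow> (\<integral>x. exp (g x) \<partial>\<kappa>)" using wK egc unfolding wc_def by blast
  show ?thesis unfolding Fv_def by (intro tendsto_diff c1 tendsto_ln c2) (use Zpos in simp)
qed

lemma KL_lsc_bound:
  assumes wE: "wc \<eta>s \<eta>" and wK: "wc \<kappa>s \<kappa>" and eP: "\<eta> \<in> P01" and kP: "\<kappa> \<in> P01"
    and sP: "\<forall>n. \<eta>s n \<in> P01 \<and> \<kappa>s n \<in> P01" and bd: "\<forall>n. KL (\<eta>s n) (\<kappa>s n) \<le> ereal B"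
  shows "KL \<eta> \<kappa> \<le> ereal B"
proof (rule ccontr)
  assume "\<not> KL \<eta> \<kappa> \<le> ereal B"
  then have "ereal B < KL \<eta> \<kappa>" by simp
  from KL_approx[OF eP kP this] obtain f C where f: "f \<in> borel_measurable borel" "\<forall>x. \<bar>f x\<bar> \<le> C" "B < Fv \<eta> \<kappa> f"
    by blast
  have "0 < Fv \<eta> \<kappa> f - B" using f(3) by simp
  from approx_cont[OF eP kP f(1,2) this] obtain g where g: "continuous_on UNIV g" "\<forall>x. \<bar>g x\<bar> \<le> C"
    "Fv \<eta> \<kappa> f - (Fv \<eta> \<kappa> f - B) < Fv \<eta> \<kappa> g" by blast
  have gm: "g \<in> borel_measurable borel" using g(1) by (rule borel_measurable_continuous_onI)
  have le: "Fv (\<eta>s n) (\<kappa>s n) g \<le> B" for n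
  proof -
    have ac: "absolutely_continuous (\<kappa>s n) (\<eta>s n)"
    proof (rule ccontr)
      assume "\<not> absolutely_continuous (\<kappa>s n) (\<eta>s n)"
      then have "KL (\<eta>s n) (\<kappa>s n) = \<infinity>" by (rule KL_nac)
      moreover have "KL (\<eta>s n) (\<kappa>s n) \<le> ereal B" using bd by blast
      ultimately show False by simp
    qed
    have "ereal (Fv (\<eta>s n) (\<kappa>s n) g) \<le> KL (\<eta>s n) (\<kappa>s n)"
      using Fv_le_KL[OF _ _ ac gm g(2)] sP by blast
    also have "\<dots> \<le> ereal B" using bd by blast
    finally show ?thesis by simp
  qed
  have "Fv \<eta> \<kappa> g \<le> B"
    using Fv_conv[OF wE wK kP g(1,2)] le by (intro LIMSEQ_le_const2) auto
  then show False using g(3) by simp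
qed

lemma KLinf_lsc_gen:
  fixes R :: "real \<Rightarrow> real \<Rightarrow> bool"
  assumes Rcl: "\<And>\<kappa>s \<kappa> \<nu>s \<nu>. wc \<kappa>s \<kappa> \<Longrightarrow> \<kappa> \<in> P01 \<Longrightarrow> \<forall>n. \<kappa>s n \<in> P01 \<Longrightarrow>
      \<forall>n. R (EVaR \<alpha> (\<kappa>s n)) (\<nu>s n) \<Longrightarrow> \<nu>s \<longlonglongrightarrow> \<nu> \<Longrightarrow> R (EVaR \<alpha> \<kappa>) \<nu>"
    and eP: "\<eta> \<in> P01" and esP: "\<forall>n. \<eta>s n \<in> P01" and we: "weak_conv01 \<eta>s \<eta>" and nu: "\<nu>s \<longlonglongrightarrow> \<nu>"
  shows "Inf {KL \<eta> \<kappa> | \<kappa>. \<kappa> \<in> P01 \<and> R (EVaR \<alpha> \<kappa>) \<nu>}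
    \<le> liminf (\<lambda>n. Inf {KL (\<eta>s n) \<kappa> | \<kappa>. \<kappa> \<in> P01 \<and> R (EVaR \<alpha> \<kappa>) (\<nu>s n)})"
    (is "?I \<le> liminf ?L")
proof (rule dense_ge)
  fix Bx :: ereal assume LB: "liminf ?L < Bx"
  show "?I \<le> Bx"
  proof (cases Bx)
    case PInf then show ?thesis by simp
  next
    case MInf then show ?thesis using LB by simp
  next
    case (real b)
    obtain r :: "nat \<Rightarrow> nat" where r: "strict_mono r" "(?L \<circ> r) \<longlonglongrightarrow> liminf ?L"
      using liminf_subseq_lim by blast
    have "eventually (\<lambda>k. (?L \<circ> r) k < ereal b) sequentially"
      using order_tendstoD(2)[OF r(2)] LB real by simp
    then obtain N where N: "\<And>k. N \<le> k \<Longrightarrow> ?L (r k) < ereal b" by (auto simp: eventually_sequentially)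
    define r' where "r' k = r (k + N)" for k
    have r': "strict_mono r'" using r(1) unfolding r'_def strict_mono_def by simp
    have "\<exists>\<kappa>. \<kappa> \<in> P01 \<and> R (EVaR \<alpha> \<kappa>) (\<nu>s (r' k)) \<and> KL (\<eta>s (r' k)) \<kappa> < ereal b" for k
    proof -
      have "?L (r' k) < ereal b" unfolding r'_def by (rule N) simp
      then show ?thesis by (auto simp: Inf_less_iff)
    qed
    then obtain \<kappa>s where ks: "\<And>k. \<kappa>s k \<in> P01" "\<And>k. R (EVaR \<alpha> (\<kappa>s k)) (\<nu>s (r' k))"
      "\<And>k. KL (\<eta>s (r' k)) (\<kappa>s k) < ereal b" by metis
    obtain r2 \<kappa> where r2: "strict_mono r2" "\<kappa> \<in> P01" "wc (\<kappa>s \<circ> r2) \<kappa>"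
      using P01_compact[of \<kappa>s] ks(1) by blast
    define \<rho> where "\<rho> = r' \<circ> r2"
    have \<rho>: "strict_mono \<rho>" unfolding \<rho>_def using r' r2(1) by (rule strict_mono_o)
    have wE: "wc (\<eta>s \<circ> \<rho>) \<eta>" by (rule wc_subseq[OF wc_of_weak_conv01[OF we eP esP] \<rho>])
    have nu': "(\<nu>s \<circ> \<rho>) \<longlonglongrightarrow> \<nu>" by (rule LIMSEQ_subseq_LIMSEQ[OF nu \<rho>])
    have "R (EVaR \<alpha> \<kappa>) \<nu>"
      by (rule Rcl[OF r2(3) r2(2) _ _ nu']) (use ks in \<open>auto simp: \<rho>_def\<close>)
    moreover have "KL \<eta> \<kappa> \<le> ereal b"
      by (rule KL_lsc_bound[OF wE r2(3) eP r2(2)]) (use ks esP in \<open>auto simp: \<rho>_def less_imp_le\<close>)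
    ultimately have "?I \<le> ereal b" using r2(2) by (intro Inf_lower2[of "KL \<eta> \<kappa>"]) auto
    then show ?thesis using real by simp
  qed
qed

theorem mainTheorem10:
  fixes \<alpha> :: real
  assumes "0 < \<alpha>" and "\<alpha> < 1"
  shows "\<forall>\<eta> \<nu> (\<eta>s :: nat \<Rightarrow> real measure) (\<nu>s :: nat \<Rightarrow> real).
           \<eta> \<in> P01 \<and> \<nu> \<in> {0<..<1} \<and> (\<forall>n. \<eta>s n \<in> P01 \<and> \<nu>s n \<in> {0<..<1}) \<and>
           weak_conv01 \<eta>s \<eta> \<and> \<nu>s \<longlonglongrightarrow> \<nu> \<longrightarrow>
             KLinf_U \<alpha> \<eta> \<nu> \<le> liminf (\<lambda>n. KLinf_U \<alpha> (\<eta>s n) (\<nu>s n)) \<and>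
             KLinf_L \<alpha> \<eta> \<nu> \<le> liminf (\<lambda>n. KLinf_L \<alpha> (\<eta>s n) (\<nu>s n))"
proof (intro allI impI)
  fix \<eta> \<nu> and \<eta>s :: "nat \<Rightarrow> real measure" and \<nu>s :: "nat \<Rightarrow> real"
  assume H: "\<eta> \<in> P01 \<and> \<nu> \<in> {0<..<1} \<and> (\<forall>n. \<eta>s n \<in> P01 \<and> \<nu>s n \<in> {0<..<1}) \<and>
           weak_conv01 \<eta>s \<eta> \<and> \<nu>s \<longlonglongrightarrow> \<nu>"
  then have eP: "\<eta> \<in> P01" and esP: "\<forall>n. \<eta>s n \<in> P01" and we: "weak_conv01 \<eta>s \<eta>" and nu: "\<nu>s \<longlonglongrightarrow> \<nu>"
    by auto
  have U: "Inf {KL \<eta> \<kappa> | \<kappa>. \<kappa> \<in> P01 \<and> (\<lambda>e v. v \<le> e) (EVaR \<alpha> \<kappa>) \<nu>}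
    \<le> liminf (\<lambda>n. Inf {KL (\<eta>s n) \<kappa> | \<kappa>. \<kappa> \<in> P01 \<and> (\<lambda>e v. v \<le> e) (EVaR \<alpha> \<kappa>) (\<nu>s n)})"
  proof (rule KLinf_lsc_gen[OF _ eP esP we nu])
    fix \<kappa>s \<kappa> and \<nu>s' :: "nat \<Rightarrow> real" and \<nu>'
    assume "wc \<kappa>s \<kappa>" "\<kappa> \<in> P01" "\<forall>n. \<kappa>s n \<in> P01" "\<forall>n. (\<lambda>e v. v \<le> e) (EVaR \<alpha> (\<kappa>s n)) (\<nu>s' n)" "\<nu>s' \<longlonglongrightarrow> \<nu>'"
    then show "(\<lambda>e v. v \<le> e) (EVaR \<alpha> \<kappa>) \<nu>'" using EVaR_usc[OF assms] by simp
  qed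
  have L: "Inf {KL \<eta> \<kappa> | \<kappa>. \<kappa> \<in> P01 \<and> (\<lambda>e v. e \<le> v) (EVaR \<alpha> \<kappa>) \<nu>}
    \<le> liminf (\<lambda>n. Inf {KL (\<eta>s n) \<kappa> | \<kappa>. \<kappa> \<in> P01 \<and> (\<lambda>e v. e \<le> v) (EVaR \<alpha> \<kappa>) (\<nu>s n)})"
  proof (rule KLinf_lsc_gen[OF _ eP esP we nu])
    fix \<kappa>s \<kappa> and \<nu>s' :: "nat \<Rightarrow> real" and \<nu>'
    assume "wc \<kappa>s \<kappa>" "\<kappa> \<in> P01" "\<forall>n. \<kappa>s n \<in> P01" "\<forall>n. (\<lambda>e v. e \<le> v) (EVaR \<alpha> (\<kappa>s n)) (\<nu>s' n)" "\<nu>s' \<longlonglongrightarrow> \<nu>'"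
    then show "(\<lambda>e v. e \<le> v) (EVaR \<alpha> \<kappa>) \<nu>'" using EVaR_lsc[OF assms] by simp
  qed
  show "KLinf_U \<alpha> \<eta> \<nu> \<le> liminf (\<lambda>n. KLinf_U \<alpha> (\<eta>s n) (\<nu>s n)) \<and>
        KLinf_L \<alpha> \<eta> \<nu> \<le> liminf (\<lambda>n. KLinf_L \<alpha> (\<eta>s n) (\<nu>s n))"
    using U L unfolding KLinf_U_def KLinf_L_def by simp
qed



end
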